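(* Let $f$ be an infinitely differentiable real-valued function on $\mathbb{R}^2$ supported in a compact set contained in the open half-plane $\{(x,y):y>0\}$. Then there exist real polynomials (1) $A_{2k,2i}(t)=\sum_{j=1}^{k+i}A_j(2k,2i)\,t^{2j-1}$ on $[0,1]$, for integers $k\ge1$ and $0\le i\le k$, and (2) $B_{2k-1,2i-1}(t)=\sum_{j=1}^{k+i-1}B_j(2k-1,2i-1)\,t^{2j-1}$ on $[0,1]$, for integers $k\ge1$ and $1\le i\le k$, such that for all $p\in\mathbb{R}$, $r>0$ and $k\ge1$, $$a_{2k}(p,r)=2\,Mf(p,r)+\int_0^r\sum_{i=0}^{k} r^{2i-1}A_{2k,2i}(u/r)\,\frac{\partial^{2i}}{\partial p^{2i}}Mf(p,u)\,du$$ and $$b_{2k-1}(p,r)=\int_0^r\sum_{i=1}^{k} r^{2(i-1)}B_{2k-1,2i-1}(u/r)\,\frac{\partial^{2i-1}}{\partial p^{2i-1}}Mf(p,u)\,du.$$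
   Context: Use Cartesian coordinates on $\mathbb{R}^2$ in which the line $L$ is the $x$-axis. For $p\in\mathbb{R}$, $r\ge0$ and $\varphi\in[-\pi,\pi]$ write $f(p,r,\varphi)=f(p+r\sin\varphi,\,r\cos\varphi)$ for the restriction of $f$ to the circle of radius $r$ centered at $(p,0)$, with $\varphi$ the angular coordinate measured from the direction perpendicular to $L$. Define $Mf(p,r)=\frac{1}{2\pi}\int_{-\pi}^{\pi}f(p,r,\varphi)\,d\varphi$ and the Fourier coefficients $a_k(p,r)=\frac1\pi\int_{-\pi}^{\pi}f(p,r,\varphi)\cos(k\varphi)\,d\varphi$, $b_k(p,r)=\frac1\pi\int_{-\pi}^{\pi}f(p,r,\varphi)\sin(k\varphi)\,d\varphi$ for $k\ge1$. For $i=0$ the $0$-th derivative is $Mf$ itself. *)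

theory Defs
  imports "HOL-Analysis.Analysis"
begin

definition pdx :: "(real \<times> real \<Rightarrow> real) \<Rightarrow> real \<times> real \<Rightarrow> real" where
  "pdx g = (\<lambda>(x, y). deriv (\<lambda>s. g (s, y)) x)"

definition pdy :: "(real \<times> real \<Rightarrow> real) \<Rightarrow> real \<times> real \<Rightarrow> real" where
  "pdy g = (\<lambda>(x, y). deriv (\<lambda>t. g (x, t)) y)"

fun iter_pd :: "bool list \<Rightarrow> (real \<times> real \<Rightarrow> real) \<Rightarrow> real \<times> real \<Rightarrow> real" where
  "iter_pd [] g = g"
| "iter_pd (b # ws) g = (if b then pdx else pdy) (iter_pd ws g)"

definition smooth2 :: "(real \<times> real \<Rightarrow> real) \<Rightarrow> bool" where
  "smooth2 f \<longleftrightarrow> (\<forall>ws. continuous_on UNIV (iter_pd ws f) \<and>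
      (\<forall>x y. (\<lambda>s. iter_pd ws f (s, y)) differentiable (at x)) \<and>
      (\<forall>x y. (\<lambda>t. iter_pd ws f (x, t)) differentiable (at y)))"

definition circ :: "(real \<times> real \<Rightarrow> real) \<Rightarrow> real \<Rightarrow> real \<Rightarrow> real \<Rightarrow> real" where
  "circ f p r \<phi> = f (p + r * sin \<phi>, r * cos \<phi>)"

definition Mf :: "(real \<times> real \<Rightarrow> real) \<Rightarrow> real \<Rightarrow> real \<Rightarrow> real" where
  "Mf f p r = (1 / (2 * pi)) * integral {-pi..pi} (\<lambda>\<phi>. circ f p r \<phi>)"

definition a_coef :: "(real \<times> real \<Rightarrow> real) \<Rightarrow> nat \<Rightarrow> real \<Rightarrow> real \<Rightarrow> real" where
  "a_coef f k p r = (1 / pi) * integral {-pi..pi} (\<lambda>\<phi>. circ f p r \<phi> * cos (real k * \<phi>))"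

definition b_coef :: "(real \<times> real \<Rightarrow> real) \<Rightarrow> nat \<Rightarrow> real \<Rightarrow> real \<Rightarrow> real" where
  "b_coef f k p r = (1 / pi) * integral {-pi..pi} (\<lambda>\<phi>. circ f p r \<phi> * sin (real k * \<phi>))"

end

theory Submission
  imports Defs
begin


lemma iter_pd_append: "iter_pd ws (iter_pd vs g) = iter_pd (ws @ vs) g"
  by (induction ws) auto

lemma smooth2_pdx: "smooth2 g \<Longrightarrow> smooth2 (pdx g)"
proof -
  have e: "iter_pd ws (pdx g) = iter_pd (ws @ [True]) g" for ws
    using iter_pd_append[of ws "[True]" g] by simp
  show "smooth2 g \<Longrightarrow> smooth2 (pdx g)" unfolding smooth2_def e by blast
qed

lemma smooth2_pdy: "smooth2 g \<Longrightarrow> smooth2 (pdy g)"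
proof -
  have e: "iter_pd ws (pdy g) = iter_pd (ws @ [False]) g" for ws
    using iter_pd_append[of ws "[False]" g] by simp
  show "smooth2 g \<Longrightarrow> smooth2 (pdy g)" unfolding smooth2_def e by blast
qed

lemma smooth2_cont: "smooth2 g \<Longrightarrow> continuous_on UNIV g"
  unfolding smooth2_def by (metis iter_pd.simps(1))

lemma smooth2_dx: "smooth2 g \<Longrightarrow> ((\<lambda>s. g (s, y)) has_real_derivative pdx g (x, y)) (at x)"
  unfolding smooth2_def pdx_def
  by (metis DERIV_deriv_iff_real_differentiable case_prod_conv iter_pd.simps(1))

lemma smooth2_dy: "smooth2 g \<Longrightarrow> ((\<lambda>t. g (x, t)) has_real_derivative pdy g (x, y)) (at y)"
  unfolding smooth2_def pdy_def
  by (metis DERIV_deriv_iff_real_differentiable case_prod_conv iter_pd.simps(1))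

lemma smooth2_has_derivative:
  assumes "smooth2 g"
  shows "(g has_derivative (\<lambda>(h, k). pdx g z * h + pdy g z * k)) (at z)"
proof -
  obtain x y where z: "z = (x, y)" by fastforce
  have fx: "((\<lambda>x. g (x, y)) has_derivative (\<lambda>h. pdx g (x, y) * h)) (at x within UNIV)"
    using smooth2_dx[OF assms] by (simp add: has_field_derivative_def)
  have fy: "((\<lambda>y. g (x, y)) has_derivative blinfun_apply (blinfun_mult_right (pdy g (x, y)))) (at y within UNIV)" for x y
    using smooth2_dy[OF assms] by (simp add: has_field_derivative_def mult.commute)
  have cpy: "continuous_on UNIV (pdy g)" using smooth2_cont[OF smooth2_pdy[OF assms]] .
  have c: "continuous_on UNIV (\<lambda>z. blinfun_mult_right (pdy g z))"
    using bounded_linear.continuous_on[OF bounded_linear_blinfun_mult_right cpy] .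
  have e: "(\<lambda>(x, y). blinfun_mult_right (pdy g (x, y))) = (\<lambda>z. blinfun_mult_right (pdy g z))"
    by (rule ext) (metis case_prod_conv surj_pair)
  have "continuous (at (x, y) within UNIV \<times> UNIV) (\<lambda>(x, y). blinfun_mult_right (pdy g (x, y)))"
    unfolding e UNIV_Times_UNIV using c by (metis continuous_on_eq_continuous_within iso_tuple_UNIV_I)
  from has_derivative_partialsI[OF fx fy this UNIV_I convex_UNIV, unfolded blinfun_mult_right.rep_eq UNIV_Times_UNIV]
  have h1: "((\<lambda>(x, y). g (x, y)) has_derivative (\<lambda>(tx, ty). pdx g (x, y) * tx + pdy g (x, y) * ty)) (at (x, y))"
    .
  have gg: "(\<lambda>(x, y). g (x, y)) = g" by (rule ext) (metis case_prod_conv surj_pair)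
  from h1 have "(g has_derivative (\<lambda>(tx, ty). pdx g (x, y) * tx + pdy g (x, y) * ty)) (at (x, y))"
    unfolding gg .
  then show ?thesis unfolding z .
qed

lemma smooth2_chain:
  assumes g: "smooth2 g"
    and a: "(\<alpha> has_real_derivative a) (at x)" and b: "(\<beta> has_real_derivative b) (at x)"
  shows "((\<lambda>x. g (\<alpha> x, \<beta> x)) has_real_derivative
           (pdx g (\<alpha> x, \<beta> x) * a + pdy g (\<alpha> x, \<beta> x) * b)) (at x)"
proof -
  have ab: "((\<lambda>x. (\<alpha> x, \<beta> x)) has_derivative (\<lambda>h. (h * a, h * b))) (at x)"
    using has_derivative_Pair[OF a[unfolded has_field_derivative_def] b[unfolded has_field_derivative_def]]
    by (simp add: mult.commute)
  have "((\<lambda>x. g (\<alpha> x, \<beta> x)) has_derivative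
          (\<lambda>h. (\<lambda>(h, k). pdx g (\<alpha> x, \<beta> x) * h + pdy g (\<alpha> x, \<beta> x) * k) (h * a, h * b))) (at x)"
    using diff_chain_at[OF ab smooth2_has_derivative[OF g, of "(\<alpha> x, \<beta> x)"]]
    by (simp add: o_def)
  moreover have "(\<lambda>h. (\<lambda>(h, k). pdx g (\<alpha> x, \<beta> x) * h + pdy g (\<alpha> x, \<beta> x) * k) (h * a, h * b))
      = (*) (pdx g (\<alpha> x, \<beta> x) * a + pdy g (\<alpha> x, \<beta> x) * b)"
    by (rule ext) (simp add: algebra_simps)
  ultimately show ?thesis unfolding has_field_derivative_def by simp
qed

lemma cont_comp2:
  assumes "continuous_on UNIV h" "continuous_on S \<alpha>" "continuous_on S \<beta>"
  shows "continuous_on S (\<lambda>z. h (\<alpha> z, \<beta> z))"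
proof -
  have "continuous_on S (\<lambda>z. (\<alpha> z, \<beta> z))" using assms(2,3) by (rule continuous_on_Pair)
  from continuous_on_compose[OF this continuous_on_subset[OF assms(1)]]
  show ?thesis by (simp add: o_def)
qed

definition Fn :: "(real \<times> real \<Rightarrow> real) \<Rightarrow> nat \<Rightarrow> real \<Rightarrow> real \<Rightarrow> real" where
  "Fn g n p r = integral {-pi..pi} (\<lambda>\<phi>. g (p + r * sin \<phi>, r * cos \<phi>) * sin \<phi> ^ n)"

definition Fr :: "(real \<times> real \<Rightarrow> real) \<Rightarrow> nat \<Rightarrow> real \<Rightarrow> real \<Rightarrow> real" where
  "Fr g n p r = integral {-pi..pi} (\<lambda>\<phi>. (pdx g (p + r * sin \<phi>, r * cos \<phi>) * sin \<phi>
      + pdy g (p + r * sin \<phi>, r * cos \<phi>) * cos \<phi>) * sin \<phi> ^ n)"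

lemma cont_circ:
  fixes S :: "real set"
  assumes "continuous_on UNIV h"
  shows "continuous_on S (\<lambda>\<phi>. h (p + r * sin \<phi>, r * cos \<phi>))"
  by (rule cont_comp2[OF assms]) (auto intro!: continuous_intros)

lemma cont_circ2:
  fixes S :: "(real \<times> real) set"
  assumes "continuous_on UNIV h"
  shows "continuous_on S (\<lambda>(x, \<phi>). h (p + x * sin \<phi>, x * cos \<phi>))"
  unfolding case_prod_unfold
  by (rule cont_comp2[OF assms]) (auto intro!: continuous_intros)

lemma cont_circ3:
  fixes S :: "(real \<times> real) set"
  assumes "continuous_on UNIV h"
  shows "continuous_on S (\<lambda>(x, \<phi>). h (x + r * sin \<phi>, r * cos \<phi>))"
  unfolding case_prod_unfold
  by (rule cont_comp2[OF assms]) (auto intro!: continuous_intros)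

lemma Fn_dp:
  assumes g: "smooth2 g"
  shows "((\<lambda>p. Fn g n p r) has_real_derivative Fn (pdx g) n p r) (at p)"
proof -
  have cx: "continuous_on UNIV (pdx g)" using smooth2_cont[OF smooth2_pdx[OF g]] .
  have c: "continuous_on UNIV g" using smooth2_cont[OF g] .
  have "((\<lambda>x. integral (cbox (-pi) pi) (\<lambda>t. g (x + r * sin t, r * cos t) * sin t ^ n)) has_real_derivative
        integral (cbox (-pi) pi) (\<lambda>t. pdx g (p + r * sin t, r * cos t) * sin t ^ n)) (at p within UNIV)"
  proof (rule leibniz_rule_field_derivative)
    fix x t
    have "((\<lambda>x. g (x + r * sin t, r * cos t)) has_real_derivative pdx g (x + r * sin t, r * cos t)) (at x)"
      using DERIV_shift[THEN iffD1, OF smooth2_dx[OF g, of "r * cos t" "x + r * sin t"]] by simp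
    then show "((\<lambda>x. g (x + r * sin t, r * cos t) * sin t ^ n) has_real_derivative
          pdx g (x + r * sin t, r * cos t) * sin t ^ n) (at x within UNIV)"
      by (auto intro!: derivative_eq_intros)
  next
    fix x
    show "(\<lambda>t. g (x + r * sin t, r * cos t) * sin t ^ n) integrable_on cbox (- pi) pi"
      by (rule integrable_continuous) (auto intro!: continuous_intros cont_circ[OF c])
  next
    show "continuous_on (UNIV \<times> cbox (- pi) pi) (\<lambda>(x, t). pdx g (x + r * sin t, r * cos t) * sin t ^ n)"
      unfolding case_prod_unfold by (auto intro!: continuous_intros cont_comp2[OF cx])
  qed auto
  then show ?thesis unfolding Fn_def by (simp add: cbox_interval)
qed

lemma circ_integrable:
  fixes h :: "real \<times> real \<Rightarrow> real"
  assumes "continuous_on UNIV h" "continuous_on {-pi..pi} w"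
  shows "(\<lambda>\<phi>. h (p + r * sin \<phi>, r * cos \<phi>) * w \<phi>) integrable_on {-pi..pi}"
  by (rule integrable_continuous_interval) (auto intro!: continuous_intros cont_circ assms)

lemma Fn_dr:
  assumes g: "smooth2 g"
  shows "((\<lambda>r. Fn g n p r) has_real_derivative Fr g n p r) (at r)"
proof -
  have cx: "continuous_on UNIV (pdx g)" using smooth2_cont[OF smooth2_pdx[OF g]] .
  have cy: "continuous_on UNIV (pdy g)" using smooth2_cont[OF smooth2_pdy[OF g]] .
  have c: "continuous_on UNIV g" using smooth2_cont[OF g] .
  have "((\<lambda>x. integral (cbox (-pi) pi) (\<lambda>t. g (p + x * sin t, x * cos t) * sin t ^ n)) has_real_derivative
        integral (cbox (-pi) pi) (\<lambda>t. (pdx g (p + r * sin t, r * cos t) * sin t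
      + pdy g (p + r * sin t, r * cos t) * cos t) * sin t ^ n)) (at r within UNIV)"
  proof (rule leibniz_rule_field_derivative)
    fix x t
    have "((\<lambda>x. g (p + x * sin t, x * cos t)) has_real_derivative
        (pdx g (p + x * sin t, x * cos t) * sin t + pdy g (p + x * sin t, x * cos t) * cos t)) (at x)"
      by (rule smooth2_chain[OF g]) (auto intro!: derivative_eq_intros)
    then show "((\<lambda>x. g (p + x * sin t, x * cos t) * sin t ^ n) has_real_derivative
          (pdx g (p + x * sin t, x * cos t) * sin t + pdy g (p + x * sin t, x * cos t) * cos t) * sin t ^ n) (at x within UNIV)"
      by (auto intro!: derivative_eq_intros)
  next
    fix x
    show "(\<lambda>t. g (p + x * sin t, x * cos t) * sin t ^ n) integrable_on cbox (- pi) pi"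
      by (rule integrable_continuous) (auto intro!: continuous_intros cont_circ[OF c])
  next
    show "continuous_on (UNIV \<times> cbox (- pi) pi) (\<lambda>(x, t). (pdx g (p + x * sin t, x * cos t) * sin t
      + pdy g (p + x * sin t, x * cos t) * cos t) * sin t ^ n)"
      unfolding case_prod_unfold by (auto intro!: continuous_intros cont_comp2[OF cx] cont_comp2[OF cy])
  qed auto
  then show ?thesis unfolding Fn_def Fr_def by (simp add: cbox_interval)
qed

lemma Fn_cont:
  assumes g: "smooth2 g"
  shows "continuous_on S (\<lambda>r. Fn g n p r)"
  by (rule continuous_at_imp_continuous_on) (auto intro: DERIV_isCont Fn_dr[OF g])

lemma ibp:
  assumes g: "smooth2 g"
  shows "integral {-pi..pi} (\<lambda>\<phi>. (pdx g (p + r * sin \<phi>, r * cos \<phi>) * (r * cos \<phi>)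
            + pdy g (p + r * sin \<phi>, r * cos \<phi>) * (- (r * sin \<phi>))) * (cos \<phi> * sin \<phi> ^ n))
       = integral {-pi..pi} (\<lambda>\<phi>. g (p + r * sin \<phi>, r * cos \<phi>) *
            (sin \<phi> ^ Suc n - real n * (cos \<phi>)\<^sup>2 * sin \<phi> ^ (n - 1)))"
proof -
  have cx: "continuous_on UNIV (pdx g)" using smooth2_cont[OF smooth2_pdx[OF g]] .
  have cy: "continuous_on UNIV (pdy g)" using smooth2_cont[OF smooth2_pdy[OF g]] .
  have c: "continuous_on UNIV g" using smooth2_cont[OF g] .
  define \<Phi> where "\<Phi> (\<phi>::real) = g (p + r * sin \<phi>, r * cos \<phi>)" for \<phi>
  define D where "D (\<phi>::real) = pdx g (p + r * sin \<phi>, r * cos \<phi>) * (r * cos \<phi>)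
            + pdy g (p + r * sin \<phi>, r * cos \<phi>) * (- (r * sin \<phi>))" for \<phi>
  define w where "w (\<phi>::real) = cos \<phi> * sin \<phi> ^ n" for \<phi>
  define w' where "w' (\<phi>::real) = - sin \<phi> * sin \<phi> ^ n + cos \<phi> * (real n * sin \<phi> ^ (n - 1) * cos \<phi>)" for \<phi>
  have dP: "(\<Phi> has_real_derivative D \<phi>) (at \<phi>)" for \<phi>
    unfolding \<Phi>_def D_def by (rule smooth2_chain[OF g]) (auto intro!: derivative_eq_intros)
  have dw: "(w has_real_derivative w' \<phi>) (at \<phi>)" for \<phi>
    unfolding w_def w'_def by (auto intro!: derivative_eq_intros)
  have "((\<lambda>\<phi>. D \<phi> * w \<phi> + \<Phi> \<phi> * w' \<phi>) has_integral ((\<Phi> pi * w pi) - (\<Phi> (-pi) * w (-pi)))) {-pi..pi}"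
  proof (rule fundamental_theorem_of_calculus)
    fix x assume "x \<in> {-pi..pi}"
    have "((\<lambda>\<phi>. \<Phi> \<phi> * w \<phi>) has_real_derivative (D x * w x + \<Phi> x * w' x)) (at x)"
      using DERIV_mult[OF dP dw] by (simp add: mult.commute)
    then show "((\<lambda>\<phi>. \<Phi> \<phi> * w \<phi>) has_vector_derivative D x * w x + \<Phi> x * w' x) (at x within {-pi..pi})"
      by (simp add: has_real_derivative_iff_has_vector_derivative[symmetric] has_field_derivative_at_within)
  qed simp
  moreover have "\<Phi> pi * w pi - \<Phi> (-pi) * w (-pi) = 0"
    unfolding \<Phi>_def w_def by simp
  ultimately have I0: "integral {-pi..pi} (\<lambda>\<phi>. D \<phi> * w \<phi> + \<Phi> \<phi> * w' \<phi>) = 0"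
    by (simp add: integral_unique)
  have i1: "(\<lambda>\<phi>. D \<phi> * w \<phi>) integrable_on {-pi..pi}"
    unfolding D_def w_def
    by (rule integrable_continuous_interval) (auto intro!: continuous_intros cont_circ cx cy)
  have i2: "(\<lambda>\<phi>. \<Phi> \<phi> * w' \<phi>) integrable_on {-pi..pi}"
    unfolding \<Phi>_def w'_def
    by (rule integrable_continuous_interval) (auto intro!: continuous_intros cont_circ c)
  from I0 integral_add[OF i1 i2]
  have "integral {-pi..pi} (\<lambda>\<phi>. D \<phi> * w \<phi>) = - integral {-pi..pi} (\<lambda>\<phi>. \<Phi> \<phi> * w' \<phi>)" by simp
  also have "\<dots> = integral {-pi..pi} (\<lambda>\<phi>. - (\<Phi> \<phi> * w' \<phi>))"
    by (simp add: integral_neg)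
  also have "(\<lambda>\<phi>. - (\<Phi> \<phi> * w' \<phi>)) = (\<lambda>\<phi>. \<Phi> \<phi> * (sin \<phi> ^ Suc n - real n * (cos \<phi>)\<^sup>2 * sin \<phi> ^ (n - 1)))"
    unfolding w'_def by (rule ext) (simp add: algebra_simps power2_eq_square)
  finally show ?thesis unfolding \<Phi>_def D_def w_def .
qed

lemma sc_pow: "real n * (cos \<phi>)\<^sup>2 * sin \<phi> ^ (n - 1) = real n * sin \<phi> ^ (n - 1) - real n * sin \<phi> ^ Suc n"
proof (cases n)
  case 0 then show ?thesis by simp
next
  case (Suc m)
  have h: "(cos \<phi>)\<^sup>2 = 1 - (sin \<phi>)\<^sup>2" by (simp add: cos_squared_eq)
  show ?thesis unfolding h Suc by (simp add: algebra_simps power2_eq_square)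
qed

lemma key:
  assumes g: "smooth2 g"
  shows "r * Fn (pdx g) n p r = r * Fr g (Suc n) p r + real (Suc n) * Fn g (Suc n) p r - real n * Fn g (n - 1) p r"
proof -
  have cx: "continuous_on UNIV (pdx g)" using smooth2_cont[OF smooth2_pdx[OF g]] .
  have cy: "continuous_on UNIV (pdy g)" using smooth2_cont[OF smooth2_pdy[OF g]] .
  have c: "continuous_on UNIV g" using smooth2_cont[OF g] .
  define X where "X (\<phi>::real) = pdx g (p + r * sin \<phi>, r * cos \<phi>)" for \<phi>
  define Y where "Y (\<phi>::real) = pdy g (p + r * sin \<phi>, r * cos \<phi>)" for \<phi>
  define \<Phi> where "\<Phi> (\<phi>::real) = g (p + r * sin \<phi>, r * cos \<phi>)" for \<phi>
  define A where "A \<phi> = (X \<phi> * sin \<phi> + Y \<phi> * cos \<phi>) * sin \<phi> ^ Suc n" for \<phi>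
  define B where "B \<phi> = (X \<phi> * (r * cos \<phi>) + Y \<phi> * (- (r * sin \<phi>))) * (cos \<phi> * sin \<phi> ^ n)" for \<phi>
  have pw: "r * (X \<phi> * sin \<phi> ^ n) = r * A \<phi> + B \<phi>" for \<phi>
  proof -
    have "r * A \<phi> + B \<phi> = r * (X \<phi> * sin \<phi> ^ n) * ((sin \<phi>)\<^sup>2 + (cos \<phi>)\<^sup>2)"
      unfolding A_def B_def power2_eq_square power_Suc by algebra
    then show ?thesis by simp
  qed
  have iA: "A integrable_on {-pi..pi}"
    unfolding A_def X_def Y_def
    by (rule integrable_continuous_interval) (auto intro!: continuous_intros cont_circ cx cy)
  have iB: "B integrable_on {-pi..pi}"
    unfolding B_def X_def Y_def
    by (rule integrable_continuous_interval) (auto intro!: continuous_intros cont_circ cx cy)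
  have i1: "(\<lambda>\<phi>. \<Phi> \<phi> * sin \<phi> ^ Suc n * real (Suc n)) integrable_on {-pi..pi}"
    unfolding \<Phi>_def
    by (rule integrable_continuous_interval) (auto intro!: continuous_intros cont_circ c)
  have i2: "(\<lambda>\<phi>. \<Phi> \<phi> * sin \<phi> ^ (n - 1) * real n) integrable_on {-pi..pi}"
    unfolding \<Phi>_def
    by (rule integrable_continuous_interval) (auto intro!: continuous_intros cont_circ c)
  have "r * Fn (pdx g) n p r = integral {-pi..pi} (\<lambda>\<phi>. r * (X \<phi> * sin \<phi> ^ n))"
    unfolding Fn_def X_def by simp
  also have "\<dots> = integral {-pi..pi} (\<lambda>\<phi>. r * A \<phi> + B \<phi>)" unfolding pw ..
  also have "\<dots> = r * integral {-pi..pi} A + integral {-pi..pi} B"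
    using integral_add[OF integrable_on_cmult_left[OF iA] iB] by simp
  also have "integral {-pi..pi} A = Fr g (Suc n) p r"
    unfolding A_def Fr_def X_def Y_def ..
  also have "integral {-pi..pi} B = integral {-pi..pi} (\<lambda>\<phi>. \<Phi> \<phi> *
            (sin \<phi> ^ Suc n - real n * (cos \<phi>)\<^sup>2 * sin \<phi> ^ (n - 1)))"
    unfolding B_def X_def Y_def \<Phi>_def by (rule ibp[OF g])
  also have "(\<lambda>\<phi>. \<Phi> \<phi> * (sin \<phi> ^ Suc n - real n * (cos \<phi>)\<^sup>2 * sin \<phi> ^ (n - 1)))
      = (\<lambda>\<phi>. \<Phi> \<phi> * sin \<phi> ^ Suc n * real (Suc n) - \<Phi> \<phi> * sin \<phi> ^ (n - 1) * real n)"
    apply (rule ext)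
    apply (subst sc_pow)
    apply (simp add: algebra_simps)
    done
  also have "integral {-pi..pi} \<dots> = real (Suc n) * Fn g (Suc n) p r - real n * Fn g (n - 1) p r"
    using integral_diff[OF i1 i2] unfolding Fn_def \<Phi>_def by simp
  finally show ?thesis by simp
qed

lemma ode:
  assumes g: "smooth2 g"
  shows "((\<lambda>r. r ^ Suc n * Fn g (Suc n) p r) has_real_derivative
           (r ^ Suc n * Fn (pdx g) n p r + real n * r ^ n * Fn g (n - 1) p r)) (at r)"
proof -
  have d1: "((\<lambda>r. r ^ Suc n) has_real_derivative real (Suc n) * r ^ n) (at r)"
    using DERIV_pow[of "Suc n" r UNIV] by simp
  have d: "((\<lambda>r. r ^ Suc n * Fn g (Suc n) p r) has_real_derivative
           (real (Suc n) * r ^ n * Fn g (Suc n) p r + Fr g (Suc n) p r * r ^ Suc n)) (at r)"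
    using DERIV_mult[OF d1 Fn_dr[OF g]] .
  have "real (Suc n) * r ^ n * Fn g (Suc n) p r + Fr g (Suc n) p r * r ^ Suc n
      = r ^ n * (r * Fr g (Suc n) p r + real (Suc n) * Fn g (Suc n) p r)"
    by (simp add: algebra_simps)
  also have "\<dots> = r ^ n * (r * Fn (pdx g) n p r + real n * Fn g (n - 1) p r)"
    using key[OF g, of r n p] by simp
  also have "\<dots> = r ^ Suc n * Fn (pdx g) n p r + real n * r ^ n * Fn g (n - 1) p r"
    by (simp add: algebra_simps)
  finally show ?thesis using d by simp
qed

lemma ode_int:
  assumes g: "smooth2 g" and r: "0 \<le> r"
  shows "r ^ Suc n * Fn g (Suc n) p r = integral {0..r} (\<lambda>u. u ^ Suc n * Fn (pdx g) n p u + real n * u ^ n * Fn g (n - 1) p u)"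
proof -
  have "((\<lambda>u. u ^ Suc n * Fn (pdx g) n p u + real n * u ^ n * Fn g (n - 1) p u) has_integral
      (r ^ Suc n * Fn g (Suc n) p r - 0 ^ Suc n * Fn g (Suc n) p 0)) {0..r}"
  proof (rule fundamental_theorem_of_calculus[OF r])
    fix x assume "x \<in> {0..r}"
    show "((\<lambda>r. r ^ Suc n * Fn g (Suc n) p r) has_vector_derivative
          (x ^ Suc n * Fn (pdx g) n p x + real n * x ^ n * Fn g (n - 1) p x)) (at x within {0..r})"
      using ode[OF g, of n p x]
      by (simp add: has_real_derivative_iff_has_vector_derivative[symmetric] has_field_derivative_at_within)
  qed
  then show ?thesis by (simp add: integral_unique)
qed


definition hpoly :: "nat \<Rightarrow> (real \<Rightarrow> real \<Rightarrow> real) \<Rightarrow> bool" where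
  "hpoly D Q \<longleftrightarrow> (\<exists>c. (\<forall>j. D < Suc (2 * j) \<longrightarrow> c j = 0) \<and>
      (\<forall>r u. Q r u = (\<Sum>j<D. c j * r ^ (D - Suc (2 * j)) * u ^ Suc (2 * j))))"

lemma sum_lessThan_extend:
  fixes A B L :: nat
  assumes "\<And>j. L \<le> j \<Longrightarrow> f j = 0" "L \<le> A" "L \<le> B"
  shows "sum f {..<A} = (sum f {..<B} :: 'a::comm_monoid_add)"
proof -
  have "sum f {..<A} = sum f {..<L}" if "L \<le> A" for A
  proof -
    have "{..<A} = {..<L} \<union> {L..<A}" using that by auto
    then have "sum f {..<A} = sum f ({..<L} \<union> {L..<A})" by simp
    also have "\<dots> = sum f {..<L} + sum f {L..<A}"
      by (rule sum.union_disjoint) auto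
    also have "sum f {L..<A} = 0" using assms(1) by (auto intro: sum.neutral)
    finally show ?thesis by simp
  qed
  then show ?thesis using assms(2,3) by metis
qed

lemma hpoly_zero: "hpoly D (\<lambda>r u. 0)"
  unfolding hpoly_def by (rule exI[of _ "\<lambda>j. 0"]) simp

lemma hpoly_add:
  assumes "hpoly D P" "hpoly D Q"
  shows "hpoly D (\<lambda>r u. P r u + Q r u)"
proof -
  obtain c where c: "\<forall>j. D < Suc (2 * j) \<longrightarrow> c j = 0" "\<forall>r u. P r u = (\<Sum>j<D. c j * r ^ (D - Suc (2 * j)) * u ^ Suc (2 * j))"
    using assms(1) unfolding hpoly_def by blast
  obtain d where d: "\<forall>j. D < Suc (2 * j) \<longrightarrow> d j = 0" "\<forall>r u. Q r u = (\<Sum>j<D. d j * r ^ (D - Suc (2 * j)) * u ^ Suc (2 * j))"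
    using assms(2) unfolding hpoly_def by blast
  show ?thesis unfolding hpoly_def
    by (rule exI[of _ "\<lambda>j. c j + d j"]) (simp add: c d sum.distrib algebra_simps)
qed

lemma hpoly_cmult:
  assumes "hpoly D P"
  shows "hpoly D (\<lambda>r u. a * P r u)"
proof -
  obtain c where c: "\<forall>j. D < Suc (2 * j) \<longrightarrow> c j = 0" "\<forall>r u. P r u = (\<Sum>j<D. c j * r ^ (D - Suc (2 * j)) * u ^ Suc (2 * j))"
    using assms(1) unfolding hpoly_def by blast
  show ?thesis unfolding hpoly_def
    by (rule exI[of _ "\<lambda>j. a * c j"]) (simp add: c sum_distrib_left algebra_simps)
qed

lemma hpoly_cong:
  assumes "hpoly D P" "\<And>r u. P r u = Q r u"
  shows "hpoly D Q"
proof -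
  have "P = Q" using assms(2) by (intro ext)
  then show ?thesis using assms(1) by simp
qed

lemma hpoly_rmult:
  assumes "hpoly D P"
  shows "hpoly (D + e) (\<lambda>r u. r ^ e * P r u)"
proof -
  obtain c where c: "\<forall>j. D < Suc (2 * j) \<longrightarrow> c j = 0" "\<forall>r u. P r u = (\<Sum>j<D. c j * r ^ (D - Suc (2 * j)) * u ^ Suc (2 * j))"
    using assms(1) unfolding hpoly_def by blast
  have "r ^ e * P r u = (\<Sum>j<D + e. c j * r ^ (D + e - Suc (2 * j)) * u ^ Suc (2 * j))" for r u
  proof -
    have Pe: "P r u = (\<Sum>j<D. c j * r ^ (D - Suc (2 * j)) * u ^ Suc (2 * j))" using c(2) by blast
    have "r ^ e * P r u = (\<Sum>j<D. c j * r ^ (D + e - Suc (2 * j)) * u ^ Suc (2 * j))"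
      unfolding Pe sum_distrib_left
    proof (rule sum.cong[OF refl])
      fix j assume "j \<in> {..<D}"
      show "r ^ e * (c j * r ^ (D - Suc (2 * j)) * u ^ Suc (2 * j)) = c j * r ^ (D + e - Suc (2 * j)) * u ^ Suc (2 * j)"
      proof (cases "D < Suc (2 * j)")
        case True then show ?thesis using c(1) by simp
      next
        case False
        then have "D + e - Suc (2 * j) = e + (D - Suc (2 * j))" by simp
        then show ?thesis by (simp add: power_add)
      qed
    qed
    also have "\<dots> = (\<Sum>j<D + e. c j * r ^ (D + e - Suc (2 * j)) * u ^ Suc (2 * j))"
      by (rule sum_lessThan_extend[where L=D]) (use c(1) in auto)
    finally show ?thesis .
  qed
  moreover have "\<forall>j. D + e < Suc (2 * j) \<longrightarrow> c j = 0" using c(1) by auto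
  ultimately show ?thesis unfolding hpoly_def by blast
qed

lemma hpoly_mono:
  assumes "odd d"
  shows "hpoly d (\<lambda>r u. u ^ d)"
proof -
  obtain k where k: "d = Suc (2 * k)" using assms oddE by (metis Suc_eq_plus1)
  have "(\<Sum>j<d. (if j = k then 1 else 0) * r ^ (d - Suc (2 * j)) * u ^ Suc (2 * j)) = u ^ d" for r u :: real
  proof -
    have kd: "k \<in> {..<d}" using k by auto
    have "(\<Sum>j<d. (if j = k then 1 else 0) * r ^ (d - Suc (2 * j)) * u ^ Suc (2 * j))
        = (\<Sum>j<d. if j = k then u ^ d else 0)"
      by (rule sum.cong) (auto simp: k)
    also have "\<dots> = u ^ d" using kd by simp
    finally show ?thesis .
  qed
  then show ?thesis unfolding hpoly_def
    by (intro exI[of _ "\<lambda>j. if j = k then 1 else 0"]) (auto simp: k)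
qed

lemma hpoly_cont:
  assumes "hpoly D P"
  shows "continuous_on S (P r)"
proof -
  obtain c where c: "\<forall>r u. P r u = (\<Sum>j<D. c j * r ^ (D - Suc (2 * j)) * u ^ Suc (2 * j))"
    using assms(1) unfolding hpoly_def by blast
  have "P r = (\<lambda>u. \<Sum>j<D. c j * r ^ (D - Suc (2 * j)) * u ^ Suc (2 * j))" using c by (intro ext) simp
  then show ?thesis by (auto intro!: continuous_intros)
qed

lemma hpoly_sum_cont:
  assumes "\<And>i. hpoly (D i) (Q i)" "\<And>i. continuous_on S (X i)"
  shows "continuous_on S (\<lambda>u. \<Sum>i\<in>I. Q i r u * X i u)"
  by (intro continuous_intros hpoly_cont[OF assms(1)] assms(2))

lemma swap:
  fixes H :: "real \<Rightarrow> real"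
  assumes H: "continuous_on {0..r} H" and r: "0 \<le> r" and e: "1 \<le> e"
  shows "integral {0..r} (\<lambda>u. u ^ (e - 1) * integral {0..u} H)
       = r ^ e / real e * integral {0..r} H - 1 / real e * integral {0..r} (\<lambda>v. v ^ e * H v)"
proof -
  define R where "R x = x ^ e / real e * integral {0..x} H - 1 / real e * integral {0..x} (\<lambda>v. v ^ e * H v)" for x
  have H2: "continuous_on {0..r} (\<lambda>v. v ^ e * H v)" by (intro continuous_intros H)
  have "((\<lambda>u. u ^ (e - 1) * integral {0..u} H) has_integral (R r - R 0)) {0..r}"
  proof (rule fundamental_theorem_of_calculus[OF r])
    fix x assume x: "x \<in> {0..r}"
    have d1: "((\<lambda>x. integral {0..x} H) has_real_derivative H x) (at x within {0..r})"
      by (rule integral_has_real_derivative[OF H x])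
    have d2: "((\<lambda>x. integral {0..x} (\<lambda>v. v ^ e * H v)) has_real_derivative x ^ e * H x) (at x within {0..r})"
      by (rule integral_has_real_derivative[OF H2 x])
    have d3: "((\<lambda>x. x ^ e / real e) has_real_derivative real e * x ^ (e - 1) / real e) (at x within {0..r})"
      using DERIV_pow[of e x "{0..r}"] by (auto intro!: derivative_eq_intros)
    have D: "(R has_real_derivative
        (real e * x ^ (e - 1) / real e * integral {0..x} H + H x * (x ^ e / real e)
         - 1 / real e * (x ^ e * H x))) (at x within {0..r})"
      unfolding R_def by (intro DERIV_diff DERIV_mult d3 d1 DERIV_cmult d2)
    have "real e * x ^ (e - 1) / real e * integral {0..x} H + H x * (x ^ e / real e)
         - 1 / real e * (x ^ e * H x) = x ^ (e - 1) * integral {0..x} H"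
      using e by (simp add: field_simps)
    from D[unfolded this] show "(R has_vector_derivative x ^ (e - 1) * integral {0..x} H) (at x within {0..r})"
      unfolding has_real_derivative_iff_has_vector_derivative .
  qed
  moreover have "R 0 = 0" unfolding R_def using e by simp
  ultimately show ?thesis unfolding R_def by (simp add: integral_unique)
qed


definition XX :: "(real \<times> real \<Rightarrow> real) \<Rightarrow> nat \<Rightarrow> real \<Rightarrow> real \<Rightarrow> real" where
  "XX g i p u = Fn ((pdx ^^ i) g) 0 p u"

lemma XX_Suc: "XX (pdx g) i p u = XX g (Suc i) p u"
  unfolding XX_def funpow_Suc_right comp_def ..

lemma smooth2_pdx_pow: "smooth2 g \<Longrightarrow> smooth2 ((pdx ^^ i) g)"
  by (induction i) (auto intro: smooth2_pdx)

lemma XX_cont: "smooth2 g \<Longrightarrow> continuous_on S (\<lambda>u. XX g i p u)"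
  unfolding XX_def by (rule Fn_cont[OF smooth2_pdx_pow])

lemma ker_cont:
  assumes "\<And>i. hpoly (D i) (Q i)" "smooth2 g"
  shows "continuous_on S (\<lambda>u. \<Sum>i\<in>I. Q i r u * XX g (f i) p u)"
  by (intro continuous_intros hpoly_cont[OF assms(1)] XX_cont[OF assms(2)])

lemma ker_int:
  assumes "\<And>i. hpoly (D i) (Q i)" "smooth2 g"
  shows "(\<lambda>u. \<Sum>i\<in>I. Q i r u * XX g (f i) p u) integrable_on {0..r}"
  by (intro integrable_continuous_interval ker_cont[OF assms])

definition Jprop :: "nat \<Rightarrow> nat \<Rightarrow> (nat \<Rightarrow> real \<Rightarrow> real \<Rightarrow> real) \<Rightarrow> bool" where
  "Jprop m a Q \<longleftrightarrow> (\<forall>i. hpoly (a + i) (Q i)) \<and> (\<forall>i r u. (m < i \<or> odd (m + i)) \<longrightarrow> Q i r u = 0) \<and>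
   (\<forall>g (p::real) (r::real). smooth2 g \<longrightarrow> 0 \<le> r \<longrightarrow> integral {0..r} (\<lambda>u. u ^ a * Fn g m p u)
       = integral {0..r} (\<lambda>u. \<Sum>i\<le>m. Q i r u * XX g i p u))"

lemma sum_comb:
  fixes Qa Qb Qc Qd X :: "nat \<Rightarrow> real"
  assumes "Qc (Suc n) = 0" "Qd (Suc n) = 0"
  shows "(\<Sum>i\<le>Suc n. (\<alpha> * ((if i = 0 then 0 else Qa (i - 1)) + k * Qc i)
            - \<beta> * ((if i = 0 then 0 else Qb (i - 1)) + k * Qd i)) * X i)
       = \<alpha> * ((\<Sum>i\<le>n. Qa i * X (Suc i)) + k * (\<Sum>i\<le>n. Qc i * X i))
         - \<beta> * ((\<Sum>i\<le>n. Qb i * X (Suc i)) + k * (\<Sum>i\<le>n. Qd i * X i))"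
proof -
  have s1: "(\<Sum>i\<le>n. Qa i * X (Suc i)) = (\<Sum>i\<le>Suc n. (if i = 0 then 0 else Qa (i - 1)) * X i)" for Qa
    by (simp only: sum.atMost_Suc_shift) simp
  have s2: "(\<Sum>i\<le>n. Qc i * X i) = (\<Sum>i\<le>Suc n. Qc i * X i)"
    "(\<Sum>i\<le>n. Qd i * X i) = (\<Sum>i\<le>Suc n. Qd i * X i)" using assms by simp_all
  show ?thesis unfolding s1[of Qa] s1[of Qb] s2
    by (simp add: sum.distrib sum_distrib_left sum_subtractf algebra_simps)
qed

lemma Jprop_zero: "odd a \<Longrightarrow> Jprop 0 a (\<lambda>i r u. if i = 0 then u ^ a else 0)"
proof -
  assume a: "odd a"
  have "hpoly (a + i) (\<lambda>r u. if i = 0 then u ^ a else 0)" for i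
    by (cases "i = 0") (auto intro: hpoly_mono[OF a] hpoly_zero)
  moreover have "integral {0..r} (\<lambda>u. u ^ a * Fn g 0 p u)
       = integral {0..r} (\<lambda>u. \<Sum>i\<le>0. (if i = 0 then u ^ a else 0) * XX g i p u)" for g p r
    unfolding XX_def by simp
  ultimately show ?thesis unfolding Jprop_def by auto
qed

lemma J_aux:
  assumes IH0: "\<forall>k a. k < Suc n \<longrightarrow> k \<le> a \<longrightarrow> odd (k + a) \<longrightarrow> (\<exists>Q. Jprop k a Q)"
    and a: "n \<le> a" "odd (Suc n + a)"
  shows "\<exists>Qc Qd. (\<forall>i. hpoly (n + i) (Qc i)) \<and> (\<forall>i. hpoly (a + i) (Qd i)) \<and>
     (\<forall>i r u. (n \<le> i \<or> odd (Suc n + i)) \<longrightarrow> Qc i r u = 0 \<and> Qd i r u = 0) \<and>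
     (\<forall>g (p::real) (r::real). smooth2 g \<longrightarrow> 0 \<le> r \<longrightarrow>
        real n * integral {0..r} (\<lambda>u. u ^ n * Fn g (n - 1) p u) = real n * integral {0..r} (\<lambda>u. \<Sum>i\<le>n. Qc i r u * XX g i p u) \<and>
        real n * integral {0..r} (\<lambda>u. u ^ a * Fn g (n - 1) p u) = real n * integral {0..r} (\<lambda>u. \<Sum>i\<le>n. Qd i r u * XX g i p u))"
proof (cases n)
  case 0
  then show ?thesis
    by (intro exI[of _ "\<lambda>i r u. 0"]) (auto intro: hpoly_zero)
next
  case (Suc k)
  have IH: "\<And>k a. k < Suc n \<Longrightarrow> k \<le> a \<Longrightarrow> odd (k + a) \<Longrightarrow> \<exists>Q. Jprop k a Q"
    using IH0 by blast
  obtain Qc where Qc: "Jprop k n Qc" using IH[of k n] Suc by auto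
  obtain Qd where Qd: "Jprop k a Qd" using IH[of k a] Suc a by auto
  have zc: "Qc i r u = 0" "Qd i r u = 0" if "n \<le> i \<or> odd (Suc n + i)" for i r u
    using Qc Qd that Suc unfolding Jprop_def by auto
  have ext: "(\<Sum>i\<le>k. Q i r u * XX g i p u) = (\<Sum>i\<le>n. Q i r u * XX g i p u)"
    if "Q n r u = 0" for Q :: "nat \<Rightarrow> real \<Rightarrow> real \<Rightarrow> real" and r u g p
    using that Suc by simp
  have h1: "\<forall>i. hpoly (n + i) (Qc i)" "\<forall>i. hpoly (a + i) (Qd i)"
    using Qc Qd unfolding Jprop_def by auto
  have h3: "\<forall>i r u. (n \<le> i \<or> odd (Suc n + i)) \<longrightarrow> Qc i r u = 0 \<and> Qd i r u = 0"
    using zc by blast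
  have h4: "\<forall>g (p::real) (r::real). smooth2 g \<longrightarrow> 0 \<le> r \<longrightarrow>
        real n * integral {0..r} (\<lambda>u. u ^ n * Fn g (n - 1) p u) = real n * integral {0..r} (\<lambda>u. \<Sum>i\<le>n. Qc i r u * XX g i p u) \<and>
        real n * integral {0..r} (\<lambda>u. u ^ a * Fn g (n - 1) p u) = real n * integral {0..r} (\<lambda>u. \<Sum>i\<le>n. Qd i r u * XX g i p u)"
  proof (intro allI impI conjI)
    fix g and p r :: real assume g: "smooth2 g" and r: "0 \<le> r"
    show "real n * integral {0..r} (\<lambda>u. u ^ n * Fn g (n - 1) p u) = real n * integral {0..r} (\<lambda>u. \<Sum>i\<le>n. Qc i r u * XX g i p u)"
    proof -
      have "integral {0..r} (\<lambda>u. u ^ n * Fn g k p u) = integral {0..r} (\<lambda>u. \<Sum>i\<le>k. Qc i r u * XX g i p u)"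
        using Qc g r unfolding Jprop_def by blast
      moreover have "(\<lambda>u. \<Sum>i\<le>k. Qc i r u * XX g i p u) = (\<lambda>u. \<Sum>i\<le>n. Qc i r u * XX g i p u)"
        using ext[of Qc, OF zc(1)] by blast
      ultimately show ?thesis using Suc by simp
    qed
    show "real n * integral {0..r} (\<lambda>u. u ^ a * Fn g (n - 1) p u) = real n * integral {0..r} (\<lambda>u. \<Sum>i\<le>n. Qd i r u * XX g i p u)"
    proof -
      have "integral {0..r} (\<lambda>u. u ^ a * Fn g k p u) = integral {0..r} (\<lambda>u. \<Sum>i\<le>k. Qd i r u * XX g i p u)"
        using Qd g r unfolding Jprop_def by blast
      moreover have "(\<lambda>u. \<Sum>i\<le>k. Qd i r u * XX g i p u) = (\<lambda>u. \<Sum>i\<le>n. Qd i r u * XX g i p u)"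
        using ext[of Qd, OF zc(2)] by blast
      ultimately show ?thesis using Suc by simp
    qed
  qed
  show ?thesis using h1 h3 h4 by blast
qed

lemma hpoly_shift:
  assumes "\<And>i. hpoly (Suc n + i) (Qa i)"
  shows "hpoly (n + i) (\<lambda>r u. if i = 0 then 0 else Qa (i - 1) r u)"
proof (cases i)
  case 0 then show ?thesis by (simp add: hpoly_zero)
next
  case (Suc j)
  then show ?thesis using assms[of j] by simp
qed

lemma J: "m \<le> a \<Longrightarrow> odd (m + a) \<Longrightarrow> \<exists>Q. Jprop m a Q"
proof (induction m arbitrary: a rule: less_induct)
  case (less m)
  show ?case
  proof (cases m)
    case 0 then show ?thesis using Jprop_zero less.prems by auto
  next
    case (Suc n)
    have IH: "\<And>k a. k < Suc n \<Longrightarrow> k \<le> a \<Longrightarrow> odd (k + a) \<Longrightarrow> \<exists>Q. Jprop k a Q"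
      using less.IH Suc by blast
    have am: "Suc n \<le> a" "odd (Suc n + a)" using less.prems Suc by auto
    obtain Qa where Qa: "Jprop n (Suc n) Qa" using IH[of n "Suc n"] by auto
    obtain Qb where Qb: "Jprop n (Suc a) Qb" using IH[of n "Suc a"] am by auto
    have n_le: "n \<le> a" using am by simp
    have IH0: "\<forall>k a. k < Suc n \<longrightarrow> k \<le> a \<longrightarrow> odd (k + a) \<longrightarrow> (\<exists>Q. Jprop k a Q)" using IH by blast
    note ex = J_aux[OF IH0 n_le am(2)]
    obtain Qc Qd where Qc: "\<forall>i. hpoly (n + i) (Qc i)" and Qd: "\<forall>i. hpoly (a + i) (Qd i)"
      and zcd: "\<forall>i r u. (n \<le> i \<or> odd (Suc n + i)) \<longrightarrow> Qc i r u = 0 \<and> Qd i r u = 0"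
      and icd: "\<forall>g (p::real) (r::real). smooth2 g \<longrightarrow> 0 \<le> r \<longrightarrow>
        real n * integral {0..r} (\<lambda>u. u ^ n * Fn g (n - 1) p u) = real n * integral {0..r} (\<lambda>u. \<Sum>i\<le>n. Qc i r u * XX g i p u) \<and>
        real n * integral {0..r} (\<lambda>u. u ^ a * Fn g (n - 1) p u) = real n * integral {0..r} (\<lambda>u. \<Sum>i\<le>n. Qd i r u * XX g i p u)"
      using ex by blast
    have hQa: "\<And>i. hpoly (Suc n + i) (Qa i)" and hQb: "\<And>i. hpoly (Suc a + i) (Qb i)"
      using Qa Qb unfolding Jprop_def by auto
    define e where "e = a - n"
    have e1: "1 \<le> e" and ae: "a = (e - 1) + Suc n" "Suc a = e + Suc n" "a = e + n"
      using am(1) unfolding e_def by auto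
    define Q where "Q i r u = r ^ e / real e * ((if i = 0 then 0 else Qa (i - 1) r u) + real n * Qc i r u)
        - 1 / real e * ((if i = 0 then 0 else Qb (i - 1) r u) + real n * Qd i r u)" for i r u
    have hQ: "hpoly (a + i) (Q i)" for i
    proof -
      have P1: "hpoly (n + i) (\<lambda>r u. (if i = 0 then 0 else Qa (i - 1) r u) + real n * Qc i r u)"
        by (intro hpoly_add hpoly_shift hQa hpoly_cmult) (use Qc in auto)
      have P1': "hpoly (a + i) (\<lambda>r u. r ^ e * ((if i = 0 then 0 else Qa (i - 1) r u) + real n * Qc i r u))"
        using hpoly_rmult[OF P1, of e] ae(3) by (simp add: add.commute add.left_commute)
      have P2: "hpoly (a + i) (\<lambda>r u. (if i = 0 then 0 else Qb (i - 1) r u) + real n * Qd i r u)"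
        by (intro hpoly_add hpoly_shift hQb hpoly_cmult) (use Qd in auto)
      have "hpoly (a + i) (\<lambda>r u. 1 / real e * (r ^ e * ((if i = 0 then 0 else Qa (i - 1) r u) + real n * Qc i r u))
          + (- 1 / real e) * ((if i = 0 then 0 else Qb (i - 1) r u) + real n * Qd i r u))"
        by (intro hpoly_add hpoly_cmult P1' P2)
      then show ?thesis by (rule hpoly_cong) (simp add: Q_def)
    qed
    have zQ: "Q i r u = 0" if "Suc n < i \<or> odd (Suc n + i)" for i r u
    proof (cases i)
      case 0 then show ?thesis using that zcd by (simp add: Q_def)
    next
      case (Suc j)
      have "n < j \<or> odd (n + j)" using that Suc by auto
      then have "Qa j r u = 0" "Qb j r u = 0" using Qa Qb unfolding Jprop_def by auto
      moreover have "Qc i r u = 0" "Qd i r u = 0" using that zcd by auto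
      ultimately show ?thesis using Suc by (simp add: Q_def)
    qed
    have iden: "integral {0..r} (\<lambda>u. u ^ a * Fn g m p u) = integral {0..r} (\<lambda>u. \<Sum>i\<le>m. Q i r u * XX g i p u)"
      if g: "smooth2 g" and r: "0 \<le> r" for g p r
    proof -
      define H where "H u = u ^ Suc n * Fn (pdx g) n p u + real n * (u ^ n * Fn g (n - 1) p u)" for u
      have gx: "smooth2 (pdx g)" using smooth2_pdx[OF g] .
      have Hc: "continuous_on {0..r} H" unfolding H_def by (intro continuous_intros Fn_cont g gx)
      have s1: "integral {0..r} (\<lambda>u. u ^ a * Fn g m p u) = integral {0..r} (\<lambda>u. u ^ (e - 1) * integral {0..u} H)"
      proof (rule integral_cong)
        fix u assume u: "u \<in> {0..r}"
        have "u ^ a * Fn g m p u = u ^ (e - 1) * (u ^ Suc n * Fn g (Suc n) p u)"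
          using Suc by (subst ae(1)) (simp add: power_add)
        also have "\<dots> = u ^ (e - 1) * integral {0..u} H"
          using ode_int[OF g, of u n p] u unfolding H_def by (simp add: mult.assoc)
        finally show "u ^ a * Fn g m p u = u ^ (e - 1) * integral {0..u} H" .
      qed
      have s2: "integral {0..r} (\<lambda>u. u ^ (e - 1) * integral {0..u} H)
          = r ^ e / real e * integral {0..r} H - 1 / real e * integral {0..r} (\<lambda>v. v ^ e * H v)"
        by (rule swap[OF Hc r e1])
      have int1: "(\<lambda>u. u ^ Suc n * Fn (pdx g) n p u) integrable_on {0..r}"
        by (intro integrable_continuous_interval continuous_intros Fn_cont gx)
      have int2: "(\<lambda>u. u ^ n * Fn g (n - 1) p u) integrable_on {0..r}"
        by (intro integrable_continuous_interval continuous_intros Fn_cont g)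
      have int3: "(\<lambda>u. u ^ Suc a * Fn (pdx g) n p u) integrable_on {0..r}"
        by (intro integrable_continuous_interval continuous_intros Fn_cont gx)
      have int4: "(\<lambda>u. u ^ a * Fn g (n - 1) p u) integrable_on {0..r}"
        by (intro integrable_continuous_interval continuous_intros Fn_cont g)
      have s3: "integral {0..r} H = integral {0..r} (\<lambda>u. u ^ Suc n * Fn (pdx g) n p u)
          + real n * integral {0..r} (\<lambda>u. u ^ n * Fn g (n - 1) p u)"
        unfolding H_def using integral_add[OF int1 integrable_on_cmult_left[OF int2, of "real n"]] by simp
      have "(\<lambda>v. v ^ e * H v) = (\<lambda>u. u ^ Suc a * Fn (pdx g) n p u + real n * (u ^ a * Fn g (n - 1) p u))"
        unfolding H_def by (rule ext) (simp add: ae(2) ae(3) power_add algebra_simps)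
      then have s4: "integral {0..r} (\<lambda>v. v ^ e * H v) = integral {0..r} (\<lambda>u. u ^ Suc a * Fn (pdx g) n p u)
          + real n * integral {0..r} (\<lambda>u. u ^ a * Fn g (n - 1) p u)"
        using integral_add[OF int3 integrable_on_cmult_left[OF int4, of "real n"]] by simp
      define SA where "SA u = (\<Sum>i\<le>n. Qa i r u * XX g (Suc i) p u)" for u
      define SB where "SB u = (\<Sum>i\<le>n. Qb i r u * XX g (Suc i) p u)" for u
      define SC where "SC u = (\<Sum>i\<le>n. Qc i r u * XX g i p u)" for u
      define SD where "SD u = (\<Sum>i\<le>n. Qd i r u * XX g i p u)" for u
      have A: "integral {0..r} (\<lambda>u. u ^ Suc n * Fn (pdx g) n p u) = integral {0..r} SA"
      proof -
        have "integral {0..r} (\<lambda>u. u ^ Suc n * Fn (pdx g) n p u) = integral {0..r} (\<lambda>u. \<Sum>i\<le>n. Qa i r u * XX (pdx g) i p u)"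
          using Qa gx r unfolding Jprop_def by blast
        then show ?thesis unfolding SA_def XX_Suc .
      qed
      have B: "integral {0..r} (\<lambda>u. u ^ Suc a * Fn (pdx g) n p u) = integral {0..r} SB"
      proof -
        have "integral {0..r} (\<lambda>u. u ^ Suc a * Fn (pdx g) n p u) = integral {0..r} (\<lambda>u. \<Sum>i\<le>n. Qb i r u * XX (pdx g) i p u)"
          using Qb gx r unfolding Jprop_def by blast
        then show ?thesis unfolding SB_def XX_Suc .
      qed
      have C: "real n * integral {0..r} (\<lambda>u. u ^ n * Fn g (n - 1) p u) = real n * integral {0..r} SC"
        using icd g r unfolding SC_def by blast
      have D: "real n * integral {0..r} (\<lambda>u. u ^ a * Fn g (n - 1) p u) = real n * integral {0..r} SD"
        using icd g r unfolding SD_def by blast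
      have iA: "SA integrable_on {0..r}" unfolding SA_def by (rule ker_int[OF hQa g])
      have iB: "SB integrable_on {0..r}" unfolding SB_def by (rule ker_int[OF hQb g])
      have iC: "SC integrable_on {0..r}" unfolding SC_def using Qc by (intro ker_int[OF _ g]) auto
      have iD: "SD integrable_on {0..r}" unfolding SD_def using Qd by (intro ker_int[OF _ g]) auto
      have eqf: "(\<lambda>u. \<Sum>i\<le>m. Q i r u * XX g i p u)
          = (\<lambda>u. r ^ e / real e * (SA u + real n * SC u) - 1 / real e * (SB u + real n * SD u))"
      proof (rule ext)
        fix u
        have "Qc (Suc n) r u = 0" "Qd (Suc n) r u = 0" using zcd by auto
        from sum_comb[of "\<lambda>i. Qc i r u" n "\<lambda>i. Qd i r u" "r ^ e / real e" "\<lambda>i. Qa i r u" "real n" "1 / real e"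
            "\<lambda>i. Qb i r u" "\<lambda>i. XX g i p u", OF this]
        show "(\<Sum>i\<le>m. Q i r u * XX g i p u) = r ^ e / real e * (SA u + real n * SC u) - 1 / real e * (SB u + real n * SD u)"
          unfolding Q_def SA_def SB_def SC_def SD_def Suc .
      qed
      have hi: "((\<lambda>u. r ^ e / real e * (SA u + real n * SC u) - 1 / real e * (SB u + real n * SD u)) has_integral
          (r ^ e / real e * (integral {0..r} SA + real n * integral {0..r} SC)
            - 1 / real e * (integral {0..r} SB + real n * integral {0..r} SD))) {0..r}"
        by (intro has_integral_diff has_integral_mult_right has_integral_add integrable_integral iA iB iC iD)
      have "integral {0..r} (\<lambda>u. \<Sum>i\<le>m. Q i r u * XX g i p u)
          = r ^ e / real e * (integral {0..r} SA + real n * integral {0..r} SC)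
            - 1 / real e * (integral {0..r} SB + real n * integral {0..r} SD)"
        unfolding eqf by (rule integral_unique[OF hi])
      also have "\<dots> = integral {0..r} (\<lambda>u. u ^ a * Fn g m p u)"
        unfolding s1 s2 s3 s4 A B C[symmetric] D[symmetric] by simp
      finally show ?thesis by simp
    qed
    have "Jprop m a Q" unfolding Jprop_def
      using hQ zQ iden Suc by blast
    then show ?thesis by blast
  qed
qed


lemma sum_comb2:
  fixes Qa Qc X :: "nat \<Rightarrow> real"
  assumes "Qc (Suc n) = 0"
  shows "(\<Sum>i\<le>Suc n. ((if i = 0 then 0 else Qa (i - 1)) + k * Qc i) * X i)
       = (\<Sum>i\<le>n. Qa i * X (Suc i)) + k * (\<Sum>i\<le>n. Qc i * X i)"
  using sum_comb[of Qc n "\<lambda>i. 0" 1 Qa k 0 "\<lambda>i. 0" X] assms by simp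

lemma powr_conv:
  fixes r u d :: real
  assumes r: "0 < r" and k: "k \<le> D" and D: "D + 1 = n + i"
  shows "r powr (- real n) * (d * r ^ (D - k) * u ^ k) = r powr (real i - 1) * (d * (u / r) ^ k)"
proof -
  have kk: "real D - real k = real (D - k)" using k by (simp add: of_nat_diff)
  have e1: "r ^ (D - k) = r powr (real D - real k)" unfolding kk using r by (simp add: powr_realpow)
  have e2: "(u / r) ^ k = u ^ k * r powr (- real k)"
    using r by (simp add: power_divide powr_minus powr_realpow divide_inverse power_mult_distrib power_inverse)
  have e3: "r powr (- real n) * r powr (real D - real k) = r powr (real i - 1) * r powr (- real k)"
  proof -
    have "real D = real n + real i - 1" using D by (metis add_diff_cancel_right' of_nat_1 of_nat_add)
    then have "- real n + (real D - real k) = real i - 1 + - real k" by simp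
    then show ?thesis by (simp only: powr_add[symmetric])
  qed
  show ?thesis unfolding e1 e2 using e3 by (simp add: algebra_simps)
qed

lemma Frep:
  assumes n: "1 \<le> n"
  shows "\<exists>c. (\<forall>i j. (n < i \<or> odd (n + i) \<or> (n + i) div 2 \<le> j) \<longrightarrow> c i j = 0) \<and>
    (\<forall>g p r. smooth2 g \<longrightarrow> 0 < r \<longrightarrow> Fn g n p r = integral {0..r} (\<lambda>u. \<Sum>i\<le>n.
        r powr (real i - 1) * (\<Sum>j<n. c i j * (u / r) ^ (2 * j + 1)) * XX g i p u))"
proof -
  obtain m where nm: "n = Suc m" using n by (cases n) auto
  have Jall: "\<forall>k a. k < Suc m \<longrightarrow> k \<le> a \<longrightarrow> odd (k + a) \<longrightarrow> (\<exists>Q. Jprop k a Q)" using J by blast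
  obtain Qa where Qa: "Jprop m (Suc m) Qa" using J[of m "Suc m"] by auto
  have oddm: "odd (Suc m + m)" by simp
  obtain Qc Qd where Qc: "\<forall>i. hpoly (m + i) (Qc i)" and Qd: "\<forall>i. hpoly (m + i) (Qd i)"
      and zcd: "\<forall>i r u. (m \<le> i \<or> odd (Suc m + i)) \<longrightarrow> Qc i r u = 0 \<and> Qd i r u = 0"
      and icd: "\<forall>g (p::real) (r::real). smooth2 g \<longrightarrow> 0 \<le> r \<longrightarrow>
        real m * integral {0..r} (\<lambda>u. u ^ m * Fn g (m - 1) p u) = real m * integral {0..r} (\<lambda>u. \<Sum>i\<le>m. Qc i r u * XX g i p u) \<and>
        real m * integral {0..r} (\<lambda>u. u ^ m * Fn g (m - 1) p u) = real m * integral {0..r} (\<lambda>u. \<Sum>i\<le>m. Qd i r u * XX g i p u)"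
    using J_aux[OF Jall order.refl oddm] by blast
  have hQa: "\<And>i. hpoly (Suc m + i) (Qa i)" using Qa unfolding Jprop_def by auto
  define K where "K i r u = (if i = 0 then 0 else Qa (i - 1) r u) + real m * Qc i r u" for i r u
  have hK: "hpoly (m + i) (K i)" for i
    unfolding K_def by (intro hpoly_add hpoly_shift hQa hpoly_cmult) (use Qc in auto)
  have zK: "K i r u = 0" if "n < i \<or> odd (n + i)" for i r u
  proof (cases i)
    case 0 then show ?thesis using that zcd nm by (simp add: K_def)
  next
    case (Suc j)
    have "m < j \<or> odd (m + j)" using that Suc nm by auto
    then have "Qa j r u = 0" using Qa unfolding Jprop_def by auto
    moreover have "Qc i r u = 0" using that zcd nm by auto
    ultimately show ?thesis using Suc by (simp add: K_def)
  qed
  have rep: "r ^ n * Fn g n p r = integral {0..r} (\<lambda>u. \<Sum>i\<le>n. K i r u * XX g i p u)"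
    if g: "smooth2 g" and r: "0 \<le> r" for g p r
  proof -
    have gx: "smooth2 (pdx g)" using smooth2_pdx[OF g] .
    have int1: "(\<lambda>u. u ^ Suc m * Fn (pdx g) m p u) integrable_on {0..r}"
      by (intro integrable_continuous_interval continuous_intros Fn_cont gx)
    have int2: "(\<lambda>u. u ^ m * Fn g (m - 1) p u) integrable_on {0..r}"
      by (intro integrable_continuous_interval continuous_intros Fn_cont g)
    have "r ^ n * Fn g n p r = integral {0..r} (\<lambda>u. u ^ Suc m * Fn (pdx g) m p u + real m * (u ^ m * Fn g (m - 1) p u))"
      using ode_int[OF g r, of m p] nm by (simp add: mult.assoc)
    also have "\<dots> = integral {0..r} (\<lambda>u. u ^ Suc m * Fn (pdx g) m p u) + real m * integral {0..r} (\<lambda>u. u ^ m * Fn g (m - 1) p u)"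
      using integral_add[OF int1 integrable_on_cmult_left[OF int2, of "real m"]] by simp
    also have "integral {0..r} (\<lambda>u. u ^ Suc m * Fn (pdx g) m p u) = integral {0..r} (\<lambda>u. \<Sum>i\<le>m. Qa i r u * XX g (Suc i) p u)"
    proof -
      have "integral {0..r} (\<lambda>u. u ^ Suc m * Fn (pdx g) m p u) = integral {0..r} (\<lambda>u. \<Sum>i\<le>m. Qa i r u * XX (pdx g) i p u)"
        using Qa gx r unfolding Jprop_def by blast
      then show ?thesis unfolding XX_Suc .
    qed
    also have "real m * integral {0..r} (\<lambda>u. u ^ m * Fn g (m - 1) p u) = real m * integral {0..r} (\<lambda>u. \<Sum>i\<le>m. Qc i r u * XX g i p u)"
      using icd g r by blast
    also have "integral {0..r} (\<lambda>u. \<Sum>i\<le>m. Qa i r u * XX g (Suc i) p u) + real m * integral {0..r} (\<lambda>u. \<Sum>i\<le>m. Qc i r u * XX g i p u)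
        = integral {0..r} (\<lambda>u. (\<Sum>i\<le>m. Qa i r u * XX g (Suc i) p u) + real m * (\<Sum>i\<le>m. Qc i r u * XX g i p u))"
    proof -
      have iA: "(\<lambda>u. \<Sum>i\<le>m. Qa i r u * XX g (Suc i) p u) integrable_on {0..r}" by (rule ker_int[OF hQa g])
      have iC: "(\<lambda>u. \<Sum>i\<le>m. Qc i r u * XX g i p u) integrable_on {0..r}" using Qc by (intro ker_int[OF _ g]) auto
      show ?thesis using integral_add[OF iA integrable_on_cmult_left[OF iC, of "real m"]] by simp
    qed
    also have "(\<lambda>u. (\<Sum>i\<le>m. Qa i r u * XX g (Suc i) p u) + real m * (\<Sum>i\<le>m. Qc i r u * XX g i p u))
        = (\<lambda>u. \<Sum>i\<le>n. K i r u * XX g i p u)"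
    proof (rule ext)
      fix u
      have "Qc (Suc m) r u = 0" using zcd by auto
      from sum_comb2[of "\<lambda>i. Qc i r u" m "\<lambda>i. Qa i r u" "real m" "\<lambda>i. XX g i p u", OF this]
      show "(\<Sum>i\<le>m. Qa i r u * XX g (Suc i) p u) + real m * (\<Sum>i\<le>m. Qc i r u * XX g i p u) = (\<Sum>i\<le>n. K i r u * XX g i p u)"
        unfolding K_def nm by simp
    qed
    finally show ?thesis .
  qed
  have "\<forall>i. \<exists>d. (\<forall>j. m + i < Suc (2 * j) \<longrightarrow> d j = 0) \<and>
      (\<forall>r u. K i r u = (\<Sum>j<m + i. d j * r ^ (m + i - Suc (2 * j)) * u ^ Suc (2 * j)))"
    using hK unfolding hpoly_def by blast
  then obtain d where d: "\<And>i j. m + i < Suc (2 * j) \<Longrightarrow> d i j = 0"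
      "\<And>i r u. K i r u = (\<Sum>j<m + i. d i j * r ^ (m + i - Suc (2 * j)) * u ^ Suc (2 * j))"
    by (metis choice)
  define c where "c i j = (if i \<le> n \<and> even (n + i) then d i j else 0)" for i j
  have zc: "c i j = 0" if "n < i \<or> odd (n + i) \<or> (n + i) div 2 \<le> j" for i j
  proof (cases "i \<le> n \<and> even (n + i)")
    case True
    then have "(n + i) div 2 \<le> j" using that by auto
    then have "m + i < Suc (2 * j)" using True nm by presburger
    then show ?thesis using d(1) by (simp add: c_def)
  next
    case False
    show ?thesis unfolding c_def by (rule if_not_P[OF False])
  qed
  have pt: "r powr (- real n) * (K i r u * X) = r powr (real i - 1) * (\<Sum>j<n. c i j * (u / r) ^ (2 * j + 1)) * X"
    if r: "0 < r" and i: "i \<le> n" for i r u X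
  proof (cases "odd (n + i)")
    case True
    then show ?thesis using zK[of i r u] by (simp add: c_def)
  next
    case False
    have "r powr (- real n) * K i r u = (\<Sum>j<m + i. r powr (- real n) * (d i j * r ^ (m + i - Suc (2 * j)) * u ^ Suc (2 * j)))"
      unfolding d(2) by (simp add: sum_distrib_left)
    also have "\<dots> = (\<Sum>j<m + i. r powr (real i - 1) * (d i j * (u / r) ^ Suc (2 * j)))"
    proof (rule sum.cong[OF refl])
      fix j assume "j \<in> {..<m + i}"
      show "r powr (- real n) * (d i j * r ^ (m + i - Suc (2 * j)) * u ^ Suc (2 * j)) = r powr (real i - 1) * (d i j * (u / r) ^ Suc (2 * j))"
      proof (cases "m + i < Suc (2 * j)")
        case True then show ?thesis using d(1) by simp
      next
        case False
        then show ?thesis by (intro powr_conv r) (use nm in auto)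
      qed
    qed
    also have "\<dots> = r powr (real i - 1) * (\<Sum>j<m + i. d i j * (u / r) ^ Suc (2 * j))"
      by (simp add: sum_distrib_left)
    also have "(\<Sum>j<m + i. d i j * (u / r) ^ Suc (2 * j)) = (\<Sum>j<n. c i j * (u / r) ^ (2 * j + 1))"
    proof -
      have "(\<Sum>j<m + i. d i j * (u / r) ^ Suc (2 * j)) = (\<Sum>j<n. d i j * (u / r) ^ Suc (2 * j))"
      proof (rule sum_lessThan_extend[where L="(n + i) div 2"])
        fix j assume "(n + i) div 2 \<le> j"
        then have "m + i < Suc (2 * j)" using nm by presburger
        then show "d i j * (u / r) ^ Suc (2 * j) = 0" using d(1) by simp
      qed (use i nm in auto)
      also have "\<dots> = (\<Sum>j<n. c i j * (u / r) ^ (2 * j + 1))"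
        using i False by (simp add: c_def)
      finally show ?thesis .
    qed
    finally show ?thesis by (simp add: mult.assoc)
  qed
  show ?thesis
  proof (intro exI[of _ c] conjI allI impI)
    fix i j assume "n < i \<or> odd (n + i) \<or> (n + i) div 2 \<le> j"
    then show "c i j = 0" by (rule zc)
  next
    fix g p r assume g: "smooth2 g" and r: "0 < (r::real)"
    have "Fn g n p r = r powr (- real n) * (r ^ n * Fn g n p r)"
      using r by (simp add: powr_minus powr_realpow)
    also have "\<dots> = r powr (- real n) * integral {0..r} (\<lambda>u. \<Sum>i\<le>n. K i r u * XX g i p u)"
      using rep[OF g] r by simp
    also have "\<dots> = integral {0..r} (\<lambda>u. r powr (- real n) * (\<Sum>i\<le>n. K i r u * XX g i p u))"
      by simp
    also have "\<dots> = integral {0..r} (\<lambda>u. \<Sum>i\<le>n. r powr (real i - 1) * (\<Sum>j<n. c i j * (u / r) ^ (2 * j + 1)) * XX g i p u)"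
    proof (rule integral_cong)
      fix u assume "u \<in> {0..r}"
      have "r powr (- real n) * (\<Sum>i\<le>n. K i r u * XX g i p u) = (\<Sum>i\<le>n. r powr (- real n) * (K i r u * XX g i p u))"
        by (rule sum_distrib_left)
      also have "\<dots> = (\<Sum>i\<le>n. r powr (real i - 1) * (\<Sum>j<n. c i j * (u / r) ^ (2 * j + 1)) * XX g i p u)"
        by (rule sum.cong[OF refl]) (rule pt[OF r], simp)
      finally show "r powr (- real n) * (\<Sum>i\<le>n. K i r u * XX g i p u) = (\<Sum>i\<le>n. r powr (real i - 1) * (\<Sum>j<n. c i j * (u / r) ^ (2 * j + 1)) * XX g i p u)" .
    qed
    finally show "Fn g n p r = integral {0..r} (\<lambda>u. \<Sum>i\<le>n. r powr (real i - 1) * (\<Sum>j<n. c i j * (u / r) ^ (2 * j + 1)) * XX g i p u)" .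
  qed
qed


fun tc :: "real \<Rightarrow> real \<Rightarrow> nat \<Rightarrow> nat \<Rightarrow> real" where
  "tc \<alpha> \<beta> 0 m = (if m = 0 then 1 else 0)"
| "tc \<alpha> \<beta> (Suc 0) m = (if m = 0 then \<alpha> else if m = 1 then \<beta> else 0)"
| "tc \<alpha> \<beta> (Suc (Suc k)) m = 2 * tc \<alpha> \<beta> (Suc k) m - 4 * (if m = 0 then 0 else tc \<alpha> \<beta> (Suc k) (m - 1)) - tc \<alpha> \<beta> k m"

lemma tc_zero: "k < m \<Longrightarrow> tc \<alpha> \<beta> k m = 0"
  by (induction \<alpha> \<beta> k m rule: tc.induct) auto

definition TP :: "real \<Rightarrow> real \<Rightarrow> nat \<Rightarrow> real \<Rightarrow> real" where
  "TP \<alpha> \<beta> k x = (\<Sum>m\<le>k. tc \<alpha> \<beta> k m * x ^ m)"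

lemma TP_rec: "TP \<alpha> \<beta> (Suc (Suc k)) x = 2 * (1 - 2 * x) * TP \<alpha> \<beta> (Suc k) x - TP \<alpha> \<beta> k x"
proof -
  have e1: "(\<Sum>m\<le>Suc (Suc k). tc \<alpha> \<beta> (Suc k) m * x ^ m) = TP \<alpha> \<beta> (Suc k) x"
    unfolding TP_def by (simp add: tc_zero)
  have e2: "(\<Sum>m\<le>Suc (Suc k). tc \<alpha> \<beta> k m * x ^ m) = TP \<alpha> \<beta> k x"
    unfolding TP_def by (simp add: tc_zero)
  have e3: "(\<Sum>m\<le>Suc (Suc k). (if m = 0 then 0 else tc \<alpha> \<beta> (Suc k) (m - 1)) * x ^ m) = x * TP \<alpha> \<beta> (Suc k) x"
    unfolding TP_def by (simp only: sum.atMost_Suc_shift) (simp add: sum_distrib_left algebra_simps)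
  have "TP \<alpha> \<beta> (Suc (Suc k)) x = (\<Sum>m\<le>Suc (Suc k). 2 * (tc \<alpha> \<beta> (Suc k) m * x ^ m)
      - 4 * ((if m = 0 then 0 else tc \<alpha> \<beta> (Suc k) (m - 1)) * x ^ m) - tc \<alpha> \<beta> k m * x ^ m)"
    unfolding TP_def by (rule sum.cong) (auto simp: algebra_simps)
  also have "\<dots> = 2 * TP \<alpha> \<beta> (Suc k) x - 4 * (x * TP \<alpha> \<beta> (Suc k) x) - TP \<alpha> \<beta> k x"
    unfolding sum_subtractf sum_distrib_left[symmetric] e1 e2 e3 ..
  finally show ?thesis by (simp add: algebra_simps)
qed

lemma cos_rec: "cos (x + 2 * y) = 2 * (1 - 2 * (sin y)\<^sup>2) * cos x - cos (x - 2 * y)" for x y :: real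
proof -
  have h: "cos (x + 2 * y) + cos (x - 2 * y) = 2 * cos x * cos (2 * y)"
    by (simp add: cos_add cos_diff)
  have "cos (x + 2 * y) = 2 * cos x * cos (2 * y) - cos (x - 2 * y)" using h by linarith
  also have "\<dots> = 2 * (1 - 2 * (sin y)\<^sup>2) * cos x - cos (x - 2 * y)" by (simp add: cos_double_sin)
  finally show ?thesis .
qed

lemma sin_rec: "sin (x + 2 * y) = 2 * (1 - 2 * (sin y)\<^sup>2) * sin x - sin (x - 2 * y)" for x y :: real
proof -
  have h: "sin (x + 2 * y) + sin (x - 2 * y) = 2 * sin x * cos (2 * y)"
    by (simp add: sin_add sin_diff)
  have "sin (x + 2 * y) = 2 * sin x * cos (2 * y) - sin (x - 2 * y)" using h by linarith
  also have "\<dots> = 2 * (1 - 2 * (sin y)\<^sup>2) * sin x - sin (x - 2 * y)" by (simp add: cos_double_sin)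
  finally show ?thesis .
qed

lemma cos_exp: "cos (real (2 * k) * \<phi>) = TP 1 (-2) k ((sin \<phi>)\<^sup>2)"
proof -
  have "cos (real (2 * k) * \<phi>) = TP 1 (-2) k ((sin \<phi>)\<^sup>2) \<and> cos (real (2 * Suc k) * \<phi>) = TP 1 (-2) (Suc k) ((sin \<phi>)\<^sup>2)"
  proof (induction k)
    case 0
    show ?case by (simp add: TP_def cos_double_sin)
  next
    case (Suc k)
    have "cos (real (2 * Suc (Suc k)) * \<phi>) = cos (real (2 * Suc k) * \<phi> + 2 * \<phi>)"
      by (simp add: algebra_simps)
    also have "\<dots> = 2 * (1 - 2 * (sin \<phi>)\<^sup>2) * cos (real (2 * Suc k) * \<phi>) - cos (real (2 * k) * \<phi>)"
      using cos_rec[of "real (2 * Suc k) * \<phi>" \<phi>] by (simp add: algebra_simps)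
    also have "\<dots> = TP 1 (-2) (Suc (Suc k)) ((sin \<phi>)\<^sup>2)"
      using Suc.IH by (simp add: TP_rec)
    finally show ?case using Suc.IH by simp
  qed
  then show ?thesis by simp
qed

lemma sin_exp: "sin (real (2 * k + 1) * \<phi>) = sin \<phi> * TP 3 (-4) k ((sin \<phi>)\<^sup>2)"
proof -
  have "sin (real (2 * k + 1) * \<phi>) = sin \<phi> * TP 3 (-4) k ((sin \<phi>)\<^sup>2) \<and>
        sin (real (2 * Suc k + 1) * \<phi>) = sin \<phi> * TP 3 (-4) (Suc k) ((sin \<phi>)\<^sup>2)"
  proof (induction k)
    case 0
    have "sin (3 * \<phi>) = sin (\<phi> + 2 * \<phi>)" by simp
    also have "\<dots> = 2 * (1 - 2 * (sin \<phi>)\<^sup>2) * sin \<phi> - sin (\<phi> - 2 * \<phi>)" by (rule sin_rec)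
    also have "\<dots> = 3 * sin \<phi> - 4 * sin \<phi> ^ 3" by (simp add: algebra_simps power2_eq_square eval_nat_numeral)
    finally have "sin (3 * \<phi>) = 3 * sin \<phi> - 4 * sin \<phi> ^ 3" .
    then show ?case by (simp add: TP_def power2_eq_square algebra_simps eval_nat_numeral)
  next
    case (Suc k)
    have "sin (real (2 * Suc (Suc k) + 1) * \<phi>) = sin (real (2 * Suc k + 1) * \<phi> + 2 * \<phi>)"
      by (simp add: algebra_simps)
    also have "\<dots> = 2 * (1 - 2 * (sin \<phi>)\<^sup>2) * sin (real (2 * Suc k + 1) * \<phi>) - sin (real (2 * k + 1) * \<phi>)"
      using sin_rec[of "real (2 * Suc k + 1) * \<phi>" \<phi>] by (simp add: algebra_simps)
    also have "\<dots> = sin \<phi> * TP 3 (-4) (Suc (Suc k)) ((sin \<phi>)\<^sup>2)"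
      using Suc.IH by (simp add: TP_rec algebra_simps)
    finally show ?case using Suc.IH by simp
  qed
  then show ?thesis by simp
qed

lemma tc_0: "tc 1 \<beta> k 0 = 1"
proof -
  have "tc 1 \<beta> k 0 = 1 \<and> tc 1 \<beta> (Suc k) 0 = 1" by (induction k) auto
  then show ?thesis by simp
qed


lemma even_split: fixes k :: nat shows "(\<And>i. odd i \<Longrightarrow> G i = 0) \<Longrightarrow> (\<Sum>i\<le>2 * k. G i) = (\<Sum>i\<le>k. (G (2 * i) :: real))"
  by (induction k) auto

lemma odd_split: fixes k :: nat shows "(\<And>i. even i \<Longrightarrow> G i = 0) \<Longrightarrow> (\<Sum>i\<le>2 * k + 1. G i) = (\<Sum>i\<le>k. (G (2 * i + 1) :: real))"
  by (induction k) auto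

lemma shift1: fixes N :: nat shows "(\<Sum>j=1..N. h (j - 1)) = (\<Sum>j<N. (h j :: real))"
  by (induction N) (auto simp: atLeastAtMostSuc_conv)

lemma reorg_a:
  fixes c :: "nat \<Rightarrow> nat \<Rightarrow> nat \<Rightarrow> real" and w X :: "nat \<Rightarrow> real" and R :: "real \<Rightarrow> real" and t :: real
  assumes zc: "\<And>n i j. n < i \<or> odd (n + i) \<or> (n + i) div 2 \<le> j \<Longrightarrow> c n i j = 0"
  shows "(\<Sum>m=1..k. w m * (\<Sum>i\<le>2 * m. R (real i - 1) * (\<Sum>j<2 * m. c (2 * m) i j * t ^ (2 * j + 1)) * X i))
       = (\<Sum>i=0..k. R (2 * real i - 1) * (\<Sum>j=1..k + i. (\<Sum>m=1..k. w m * c (2 * m) (2 * i) (j - 1)) * t ^ (2 * j - 1)) * X (2 * i))"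
proof -
  define S where "S m i = (\<Sum>j<2 * m. c (2 * m) i j * t ^ (2 * j + 1))" for m i
  define G where "G i = (\<Sum>m=1..k. w m * (R (real i - 1) * S m i * X i))" for i
  have S0: "S m i = 0" if "2 * m < i \<or> odd i" for m i
    unfolding S_def using zc that by (auto intro!: sum.neutral)
  have "(\<Sum>m=1..k. w m * (\<Sum>i\<le>2 * m. R (real i - 1) * S m i * X i))
      = (\<Sum>m=1..k. w m * (\<Sum>i\<le>2 * k. R (real i - 1) * S m i * X i))"
  proof (rule sum.cong[OF refl])
    fix m assume m: "m \<in> {1..k}"
    have "(\<Sum>i\<le>2 * m. R (real i - 1) * S m i * X i) = (\<Sum>i\<le>2 * k. R (real i - 1) * S m i * X i)"
      by (rule sum.mono_neutral_left) (use m S0 in auto)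
    then show "w m * (\<Sum>i\<le>2 * m. R (real i - 1) * S m i * X i) = w m * (\<Sum>i\<le>2 * k. R (real i - 1) * S m i * X i)" by simp
  qed
  also have "\<dots> = (\<Sum>i\<le>2 * k. G i)"
    unfolding G_def sum_distrib_left by (rule sum.swap)
  also have "\<dots> = (\<Sum>i\<le>k. G (2 * i))"
    by (rule even_split) (simp add: G_def S0)
  also have "\<dots> = (\<Sum>i=0..k. R (2 * real i - 1) * (\<Sum>j=1..k + i. (\<Sum>m=1..k. w m * c (2 * m) (2 * i) (j - 1)) * t ^ (2 * j - 1)) * X (2 * i))"
    unfolding atLeast0AtMost
  proof (rule sum.cong[OF refl])
    fix i assume i: "i \<in> {..k}"
    have Sx: "S m (2 * i) = (\<Sum>j<k + i. c (2 * m) (2 * i) j * t ^ (2 * j + 1))" if m: "m \<in> {1..k}" for m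
      unfolding S_def
    proof (rule sum_lessThan_extend[where L="if i \<le> m then m + i else 0"])
      fix j assume "(if i \<le> m then m + i else 0) \<le> j"
      then show "c (2 * m) (2 * i) j * t ^ (2 * j + 1) = 0"
        using zc[of "2 * m" "2 * i" j] by (cases "i \<le> m") auto
    qed (use m in auto)
    have "G (2 * i) = R (2 * real i - 1) * (\<Sum>m=1..k. w m * S m (2 * i)) * X (2 * i)"
      unfolding G_def by (simp add: sum_distrib_left sum_distrib_right algebra_simps)
    also have "(\<Sum>m=1..k. w m * S m (2 * i)) = (\<Sum>m=1..k. \<Sum>j<k + i. w m * c (2 * m) (2 * i) j * t ^ (2 * j + 1))"
      by (rule sum.cong[OF refl]) (simp add: Sx sum_distrib_left mult.assoc)
    also have "\<dots> = (\<Sum>j<k + i. (\<Sum>m=1..k. w m * c (2 * m) (2 * i) j) * t ^ (2 * j + 1))"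
      by (subst sum.swap) (simp add: sum_distrib_right)
    also have "\<dots> = (\<Sum>j=1..k + i. (\<Sum>m=1..k. w m * c (2 * m) (2 * i) (j - 1)) * t ^ (2 * (j - 1) + 1))"
      by (rule shift1[symmetric, where h="\<lambda>j. (\<Sum>m=1..k. w m * c (2 * m) (2 * i) j) * t ^ (2 * j + 1)"])
    also have "\<dots> = (\<Sum>j=1..k + i. (\<Sum>m=1..k. w m * c (2 * m) (2 * i) (j - 1)) * t ^ (2 * j - 1))"
    proof (rule sum.cong[OF refl])
      fix j assume "j \<in> {1..k + i}"
      then have "2 * (j - 1) + 1 = 2 * j - 1" by auto
      then show "(\<Sum>m=1..k. w m * c (2 * m) (2 * i) (j - 1)) * t ^ (2 * (j - 1) + 1) = (\<Sum>m=1..k. w m * c (2 * m) (2 * i) (j - 1)) * t ^ (2 * j - 1)"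
        by (simp only:)
    qed
    finally show "G (2 * i) = R (2 * real i - 1) * (\<Sum>j=1..k + i. (\<Sum>m=1..k. w m * c (2 * m) (2 * i) (j - 1)) * t ^ (2 * j - 1)) * X (2 * i)" .
  qed
  finally show ?thesis unfolding S_def .
qed

lemma reorg_b:
  fixes c :: "nat \<Rightarrow> nat \<Rightarrow> nat \<Rightarrow> real" and w X :: "nat \<Rightarrow> real" and R :: "real \<Rightarrow> real" and t :: real
  assumes zc: "\<And>n i j. n < i \<or> odd (n + i) \<or> (n + i) div 2 \<le> j \<Longrightarrow> c n i j = 0"
  shows "(\<Sum>m\<le>k. w m * (\<Sum>i\<le>2 * m + 1. R (real i - 1) * (\<Sum>j<2 * m + 1. c (2 * m + 1) i j * t ^ (2 * j + 1)) * X i))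
       = (\<Sum>i=1..Suc k. R (real (2 * i - 1) - 1) * (\<Sum>j=1..Suc k + i - 1. (\<Sum>m\<le>k. w m * c (2 * m + 1) (2 * i - 1) (j - 1)) * t ^ (2 * j - 1)) * X (2 * i - 1))"
proof -
  define S where "S m i = (\<Sum>j<2 * m + 1. c (2 * m + 1) i j * t ^ (2 * j + 1))" for m i
  define G where "G i = (\<Sum>m\<le>k. w m * (R (real i - 1) * S m i * X i))" for i
  have S0: "S m i = 0" if "2 * m + 1 < i \<or> even i" for m i
    unfolding S_def using zc that by (auto intro!: sum.neutral)
  have "(\<Sum>m\<le>k. w m * (\<Sum>i\<le>2 * m + 1. R (real i - 1) * S m i * X i))
      = (\<Sum>m\<le>k. w m * (\<Sum>i\<le>2 * k + 1. R (real i - 1) * S m i * X i))"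
  proof (rule sum.cong[OF refl])
    fix m assume m: "m \<in> {..k}"
    have "(\<Sum>i\<le>2 * m + 1. R (real i - 1) * S m i * X i) = (\<Sum>i\<le>2 * k + 1. R (real i - 1) * S m i * X i)"
      by (rule sum.mono_neutral_left) (use m S0 in auto)
    then show "w m * (\<Sum>i\<le>2 * m + 1. R (real i - 1) * S m i * X i) = w m * (\<Sum>i\<le>2 * k + 1. R (real i - 1) * S m i * X i)" by simp
  qed
  also have "\<dots> = (\<Sum>i\<le>2 * k + 1. G i)"
    unfolding G_def sum_distrib_left by (rule sum.swap)
  also have "\<dots> = (\<Sum>i\<le>k. G (2 * i + 1))"
    by (rule odd_split) (simp add: G_def S0)
  also have "\<dots> = (\<Sum>i<Suc k. G (2 * i + 1))" by (simp add: lessThan_Suc_atMost)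
  also have "\<dots> = (\<Sum>i=1..Suc k. G (2 * (i - 1) + 1))"
    by (rule shift1[symmetric, where h="\<lambda>i. G (2 * i + 1)"])
  also have "\<dots> = (\<Sum>i=1..Suc k. R (real (2 * i - 1) - 1) * (\<Sum>j=1..Suc k + i - 1. (\<Sum>m\<le>k. w m * c (2 * m + 1) (2 * i - 1) (j - 1)) * t ^ (2 * j - 1)) * X (2 * i - 1))"
  proof (rule sum.cong[OF refl])
    fix i assume i: "i \<in> {1..Suc k}"
    then obtain l where l: "i = Suc l" and lk: "l \<le> k" by (cases i) auto
    have i2: "2 * (i - 1) + 1 = 2 * i - 1" "Suc k + i - 1 = k + i" using i by auto
    have Sx: "S m (2 * i - 1) = (\<Sum>j<k + i. c (2 * m + 1) (2 * i - 1) j * t ^ (2 * j + 1))" if m: "m \<in> {..k}" for m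
      unfolding S_def
    proof (rule sum_lessThan_extend[where L="if l \<le> m then m + l + 1 else 0"])
      fix j assume "(if l \<le> m then m + l + 1 else 0) \<le> j"
      then show "c (2 * m + 1) (2 * i - 1) j * t ^ (2 * j + 1) = 0"
        using zc[of "2 * m + 1" "2 * i - 1" j] l by (cases "l \<le> m") auto
    qed (use m l in auto)
    have "G (2 * i - 1) = R (real (2 * i - 1) - 1) * (\<Sum>m\<le>k. w m * S m (2 * i - 1)) * X (2 * i - 1)"
      unfolding G_def by (simp add: sum_distrib_left sum_distrib_right algebra_simps)
    also have "(\<Sum>m\<le>k. w m * S m (2 * i - 1)) = (\<Sum>m\<le>k. \<Sum>j<k + i. w m * c (2 * m + 1) (2 * i - 1) j * t ^ (2 * j + 1))"
    proof (rule sum.cong[OF refl])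
      fix m assume m: "m \<in> {..k}"
      show "w m * S m (2 * i - 1) = (\<Sum>j<k + i. w m * c (2 * m + 1) (2 * i - 1) j * t ^ (2 * j + 1))"
        unfolding Sx[OF m] sum_distrib_left by (simp only: mult.assoc)
    qed
    also have "\<dots> = (\<Sum>j<k + i. (\<Sum>m\<le>k. w m * c (2 * m + 1) (2 * i - 1) j) * t ^ (2 * j + 1))"
      by (subst sum.swap) (simp add: sum_distrib_right)
    also have "\<dots> = (\<Sum>j=1..k + i. (\<Sum>m\<le>k. w m * c (2 * m + 1) (2 * i - 1) (j - 1)) * t ^ (2 * (j - 1) + 1))"
      by (rule shift1[symmetric, where h="\<lambda>j. (\<Sum>m\<le>k. w m * c (2 * m + 1) (2 * i - 1) j) * t ^ (2 * j + 1)"])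
    also have "\<dots> = (\<Sum>j=1..k + i. (\<Sum>m\<le>k. w m * c (2 * m + 1) (2 * i - 1) (j - 1)) * t ^ (2 * j - 1))"
    proof (rule sum.cong[OF refl])
      fix j assume "j \<in> {1..k + i}"
      then have "2 * (j - 1) + 1 = 2 * j - 1" by auto
      then show "(\<Sum>m\<le>k. w m * c (2 * m + 1) (2 * i - 1) (j - 1)) * t ^ (2 * (j - 1) + 1) = (\<Sum>m\<le>k. w m * c (2 * m + 1) (2 * i - 1) (j - 1)) * t ^ (2 * j - 1)"
        by (simp only:)
    qed
    finally show "G (2 * (i - 1) + 1) = R (real (2 * i - 1) - 1) * (\<Sum>j=1..Suc k + i - 1. (\<Sum>m\<le>k. w m * c (2 * m + 1) (2 * i - 1) (j - 1)) * t ^ (2 * j - 1)) * X (2 * i - 1)"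
      unfolding i2 .
  qed
  finally show ?thesis unfolding S_def .
qed


lemma Mf_Fn: "Mf g q u = Fn g 0 q u / (2 * pi)"
  unfolding Mf_def circ_def Fn_def by simp

lemma deriv_Mf:
  assumes g: "smooth2 g"
  shows "deriv (\<lambda>q. Mf g q u) = (\<lambda>q. Mf (pdx g) q u)"
proof (rule ext)
  fix q
  have "((\<lambda>q. Fn g 0 q u / (2 * pi)) has_real_derivative Fn (pdx g) 0 q u / (2 * pi)) (at q)"
    by (auto intro!: derivative_eq_intros Fn_dp[OF g])
  then show "deriv (\<lambda>q. Mf g q u) q = Mf (pdx g) q u"
    unfolding Mf_Fn by (rule DERIV_imp_deriv)
qed

lemma derivs_Mf:
  assumes g: "smooth2 g"
  shows "(deriv ^^ i) (\<lambda>q. Mf g q u) = (\<lambda>q. Mf ((pdx ^^ i) g) q u)"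
proof (induction i)
  case 0 then show ?case by simp
next
  case (Suc i)
  then show ?case using deriv_Mf[OF smooth2_pdx_pow[OF g, of i]] by simp
qed

lemma D_XX:
  assumes g: "smooth2 g"
  shows "(deriv ^^ i) (\<lambda>q. Mf g q u) p = XX g i p u / (2 * pi)"
proof -
  have "(deriv ^^ i) (\<lambda>q. Mf g q u) p = Mf ((pdx ^^ i) g) p u"
    using fun_cong[OF derivs_Mf[OF g, of i u], of p] by simp
  then show ?thesis by (simp add: XX_def Mf_Fn)
qed

lemma circ_int:
  assumes g: "smooth2 g"
  shows "(\<lambda>\<phi>. circ g p r \<phi> * sin \<phi> ^ n) integrable_on {-pi..pi}"
  unfolding circ_def by (rule circ_integrable[OF smooth2_cont[OF g]]) (intro continuous_intros)

lemma a_expand: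
  assumes g: "smooth2 g"
  shows "a_coef g (2 * k) p r = 2 * Mf g p r + (1 / pi) * (\<Sum>m=1..k. tc 1 (-2) k m * Fn g (2 * m) p r)"
proof -
  have "integral {-pi..pi} (\<lambda>\<phi>. circ g p r \<phi> * cos (real (2 * k) * \<phi>))
      = integral {-pi..pi} (\<lambda>\<phi>. \<Sum>m\<le>k. tc 1 (-2) k m * (circ g p r \<phi> * sin \<phi> ^ (2 * m)))"
    unfolding cos_exp TP_def
    by (rule integral_cong) (simp only: sum_distrib_left power_mult, simp add: algebra_simps)
  also have "\<dots> = (\<Sum>m\<le>k. integral {-pi..pi} (\<lambda>\<phi>. tc 1 (-2) k m * (circ g p r \<phi> * sin \<phi> ^ (2 * m))))"
    by (rule integral_sum) (simp, rule integrable_on_mult_right[OF circ_int[OF g]])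
  also have "\<dots> = (\<Sum>m\<le>k. tc 1 (-2) k m * Fn g (2 * m) p r)"
    unfolding Fn_def circ_def by simp
  also have "\<dots> = tc 1 (-2) k 0 * Fn g 0 p r + (\<Sum>m=1..k. tc 1 (-2) k m * Fn g (2 * m) p r)"
    by (simp add: atMost_atLeast0 sum.atLeast_Suc_atMost)
  also have "tc 1 (-2) k 0 * Fn g 0 p r = 2 * pi * Mf g p r"
    by (simp add: tc_0 Mf_Fn)
  finally show ?thesis unfolding a_coef_def by (simp add: algebra_simps)
qed

lemma b_expand:
  assumes g: "smooth2 g"
  shows "b_coef g (2 * k + 1) p r = (1 / pi) * (\<Sum>m\<le>k. tc 3 (-4) k m * Fn g (2 * m + 1) p r)"
proof -
  have "integral {-pi..pi} (\<lambda>\<phi>. circ g p r \<phi> * sin (real (2 * k + 1) * \<phi>))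
      = integral {-pi..pi} (\<lambda>\<phi>. \<Sum>m\<le>k. tc 3 (-4) k m * (circ g p r \<phi> * sin \<phi> ^ (2 * m + 1)))"
    unfolding sin_exp TP_def
    by (rule integral_cong) (simp only: sum_distrib_left power_add power_mult power_one_right, simp add: algebra_simps)
  also have "\<dots> = (\<Sum>m\<le>k. integral {-pi..pi} (\<lambda>\<phi>. tc 3 (-4) k m * (circ g p r \<phi> * sin \<phi> ^ (2 * m + 1))))"
    by (rule integral_sum) (simp, rule integrable_on_mult_right[OF circ_int[OF g]])
  also have "\<dots> = (\<Sum>m\<le>k. tc 3 (-4) k m * Fn g (2 * m + 1) p r)"
    unfolding Fn_def circ_def by simp
  finally show ?thesis unfolding b_coef_def by simp
qed

theorem lemma1:
  fixes f :: "real \<times> real \<Rightarrow> real" and K :: "(real \<times> real) set"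
  assumes "smooth2 f"
    and "compact K" and "K \<subseteq> {z. snd z > 0}" and "\<forall>z. z \<notin> K \<longrightarrow> f z = 0"
  shows "\<exists>(A :: nat \<Rightarrow> nat \<Rightarrow> nat \<Rightarrow> real) (B :: nat \<Rightarrow> nat \<Rightarrow> nat \<Rightarrow> real).
    \<forall>p r k. 0 < r \<and> 1 \<le> k \<longrightarrow>
      a_coef f (2 * k) p r
        = 2 * Mf f p r
          + integral {0..r} (\<lambda>u. \<Sum>i = 0..k.
              r powr (2 * real i - 1)
              * (\<Sum>j = 1..k + i. A k i j * (u / r) ^ (2 * j - 1))
              * (deriv ^^ (2 * i)) (\<lambda>q. Mf f q u) p)
      \<and> b_coef f (2 * k - 1) p r
        = integral {0..r} (\<lambda>u. \<Sum>i = 1..k.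
              r ^ (2 * (i - 1))
              * (\<Sum>j = 1..k + i - 1. B k i j * (u / r) ^ (2 * j - 1))
              * (deriv ^^ (2 * i - 1)) (\<lambda>q. Mf f q u) p)"
proof -
  have g: "smooth2 f" using assms(1) .
  define P where "P n c \<longleftrightarrow> (\<forall>i j. (n < i \<or> odd (n + i) \<or> (n + i) div 2 \<le> j) \<longrightarrow> c i j = 0) \<and>
    (\<forall>g p r. smooth2 g \<longrightarrow> 0 < r \<longrightarrow> Fn g n p r = integral {0..r} (\<lambda>u. \<Sum>i\<le>n.
        r powr (real i - 1) * (\<Sum>j<n. c i j * (u / r) ^ (2 * j + 1)) * XX g i p u))"
    for n :: nat and c :: "nat \<Rightarrow> nat \<Rightarrow> real"
  define cc where "cc n = (if n = 0 then (\<lambda>i j. 0) else (SOME c. P n c))" for n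
  have ccP: "P n (cc n)" if n: "1 \<le> n" for n
  proof -
    have "\<exists>c. P n c" using Frep[OF n] unfolding P_def .
    then have "P n (SOME c. P n c)" by (rule someI_ex)
    then show ?thesis using n by (simp add: cc_def)
  qed
  have zc: "cc n i j = 0" if "n < i \<or> odd (n + i) \<or> (n + i) div 2 \<le> j" for n i j
  proof (cases "n = 0")
    case True then show ?thesis by (simp add: cc_def)
  next
    case False
    then have "P n (cc n)" by (intro ccP) simp
    then show ?thesis using that unfolding P_def by blast
  qed
  define A where "A k i j = (\<Sum>m=1..k. (2 * tc 1 (-2) k m) * cc (2 * m) (2 * i) (j - 1))" for k i j
  define B where "B k i j = (\<Sum>m\<le>k - 1. (2 * tc 3 (-4) (k - 1) m) * cc (2 * m + 1) (2 * i - 1) (j - 1))" for k i j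
  have main: "(a_coef f (2 * k) p r = 2 * Mf f p r
          + integral {0..r} (\<lambda>u. \<Sum>i = 0..k.
              r powr (2 * real i - 1)
              * (\<Sum>j = 1..k + i. A k i j * (u / r) ^ (2 * j - 1))
              * (deriv ^^ (2 * i)) (\<lambda>q. Mf f q u) p))
      \<and> (b_coef f (2 * k - 1) p r
        = integral {0..r} (\<lambda>u. \<Sum>i = 1..k.
              r ^ (2 * (i - 1))
              * (\<Sum>j = 1..k + i - 1. B k i j * (u / r) ^ (2 * j - 1))
              * (deriv ^^ (2 * i - 1)) (\<lambda>q. Mf f q u) p))"
    if rk: "0 < r \<and> 1 \<le> k" for p r :: real and k :: nat
  proof (rule conjI)
    have r: "0 < r" and k: "1 \<le> k" using rk by auto
    define D where "D i u = (deriv ^^ i) (\<lambda>q. Mf f q u) p" for i u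
    have DX: "D i u = XX f i p u / (2 * pi)" for i u unfolding D_def by (rule D_XX[OF g])
    define Ia where "Ia n u = (\<Sum>i\<le>n. r powr (real i - 1) * (\<Sum>j<n. cc n i j * (u / r) ^ (2 * j + 1)) * D i u)" for n u
    have Iac: "continuous_on {0..r} (Ia n)" for n
    proof -
      have "Ia n = (\<lambda>u. \<Sum>i\<le>n. r powr (real i - 1) * (\<Sum>j<n. cc n i j * (u / r) ^ (2 * j + 1)) * (XX f i p u / (2 * pi)))"
        unfolding Ia_def DX ..
      moreover have "r \<noteq> 0" using r by simp
      ultimately show ?thesis by (auto intro!: continuous_intros XX_cont[OF g])
    qed
    have Fn_Ia: "Fn f n p r = 2 * pi * integral {0..r} (Ia n)" if n: "1 \<le> n" for n
    proof -
      have "Fn f n p r = integral {0..r} (\<lambda>u. \<Sum>i\<le>n. r powr (real i - 1) * (\<Sum>j<n. cc n i j * (u / r) ^ (2 * j + 1)) * XX f i p u)"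
        using ccP[OF n] g r unfolding P_def by blast
      also have "\<dots> = integral {0..r} (\<lambda>u. 2 * pi * Ia n u)"
        unfolding Ia_def DX by (rule integral_cong) (simp add: sum_distrib_left algebra_simps)
      finally show ?thesis by simp
    qed
    show "a_coef f (2 * k) p r = 2 * Mf f p r
          + integral {0..r} (\<lambda>u. \<Sum>i = 0..k.
              r powr (2 * real i - 1)
              * (\<Sum>j = 1..k + i. A k i j * (u / r) ^ (2 * j - 1))
              * (deriv ^^ (2 * i)) (\<lambda>q. Mf f q u) p)"
    proof -
      have "(1 / pi) * (\<Sum>m=1..k. tc 1 (-2) k m * Fn f (2 * m) p r)
          = (\<Sum>m=1..k. integral {0..r} (\<lambda>u. 2 * tc 1 (-2) k m * Ia (2 * m) u))"
        unfolding sum_distrib_left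
        by (rule sum.cong[OF refl]) (simp add: Fn_Ia)
      also have "\<dots> = integral {0..r} (\<lambda>u. \<Sum>m=1..k. 2 * tc 1 (-2) k m * Ia (2 * m) u)"
        by (rule integral_sum[symmetric]) (auto intro!: integrable_continuous_interval continuous_intros Iac)
      also have "\<dots> = integral {0..r} (\<lambda>u. \<Sum>i = 0..k.
              r powr (2 * real i - 1)
              * (\<Sum>j = 1..k + i. A k i j * (u / r) ^ (2 * j - 1))
              * (deriv ^^ (2 * i)) (\<lambda>q. Mf f q u) p)"
      proof (rule integral_cong)
        fix u
        show "(\<Sum>m=1..k. 2 * tc 1 (-2) k m * Ia (2 * m) u) = (\<Sum>i = 0..k.
              r powr (2 * real i - 1)
              * (\<Sum>j = 1..k + i. A k i j * (u / r) ^ (2 * j - 1))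
              * (deriv ^^ (2 * i)) (\<lambda>q. Mf f q u) p)"
          using reorg_a[where c=cc and w="\<lambda>m. 2 * tc 1 (-2) k m" and k=k and R="\<lambda>x. r powr x" and t="u / r" and X="\<lambda>i. D i u", OF zc]
          unfolding Ia_def A_def D_def by simp
      qed
      finally show ?thesis using a_expand[OF g, of k p r] by simp
    qed
    show "b_coef f (2 * k - 1) p r
        = integral {0..r} (\<lambda>u. \<Sum>i = 1..k.
              r ^ (2 * (i - 1))
              * (\<Sum>j = 1..k + i - 1. B k i j * (u / r) ^ (2 * j - 1))
              * (deriv ^^ (2 * i - 1)) (\<lambda>q. Mf f q u) p)"
    proof -
      obtain k' where kk: "k = Suc k'" using k by (cases k) auto
      have "b_coef f (2 * k - 1) p r = (1 / pi) * (\<Sum>m\<le>k'. tc 3 (-4) k' m * Fn f (2 * m + 1) p r)"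
        using b_expand[OF g, of k' p r] kk by simp
      also have "\<dots> = (\<Sum>m\<le>k'. integral {0..r} (\<lambda>u. 2 * tc 3 (-4) k' m * Ia (2 * m + 1) u))"
        unfolding sum_distrib_left
        by (rule sum.cong[OF refl]) (simp add: Fn_Ia)
      also have "\<dots> = integral {0..r} (\<lambda>u. \<Sum>m\<le>k'. 2 * tc 3 (-4) k' m * Ia (2 * m + 1) u)"
        by (rule integral_sum[symmetric]) (auto intro!: integrable_continuous_interval continuous_intros Iac)
      also have "\<dots> = integral {0..r} (\<lambda>u. \<Sum>i = 1..k.
              r ^ (2 * (i - 1))
              * (\<Sum>j = 1..k + i - 1. B k i j * (u / r) ^ (2 * j - 1))
              * (deriv ^^ (2 * i - 1)) (\<lambda>q. Mf f q u) p)"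
      proof (rule integral_cong)
        fix u
        have "(\<Sum>m\<le>k'. 2 * tc 3 (-4) k' m * Ia (2 * m + 1) u)
            = (\<Sum>i=1..Suc k'. r powr (real (2 * i - 1) - 1) * (\<Sum>j=1..Suc k' + i - 1. B k i j * (u / r) ^ (2 * j - 1)) * D (2 * i - 1) u)"
          using reorg_b[where c=cc and w="\<lambda>m. 2 * tc 3 (-4) k' m" and k=k' and R="\<lambda>x. r powr x" and t="u / r" and X="\<lambda>i. D i u", OF zc]
          unfolding Ia_def B_def kk by (simp add: mult.assoc)
        also have "\<dots> = (\<Sum>i = 1..k.
              r ^ (2 * (i - 1))
              * (\<Sum>j = 1..k + i - 1. B k i j * (u / r) ^ (2 * j - 1))
              * (deriv ^^ (2 * i - 1)) (\<lambda>q. Mf f q u) p)"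
        proof (rule sum.cong)
          fix i assume i: "i \<in> {1..k}"
          then have e: "real (2 * i - 1) - 1 = real (2 * (i - 1))" by (simp add: of_nat_diff)
          have "r powr (real (2 * i - 1) - 1) = r powr (real (2 * (i - 1)))" by (simp only: e)
          also have "\<dots> = r ^ (2 * (i - 1))" using r by (rule powr_realpow)
          finally have "r powr (real (2 * i - 1) - 1) = r ^ (2 * (i - 1))" .
          then show "r powr (real (2 * i - 1) - 1) * (\<Sum>j=1..Suc k' + i - 1. B k i j * (u / r) ^ (2 * j - 1)) * D (2 * i - 1) u
              = r ^ (2 * (i - 1)) * (\<Sum>j = 1..k + i - 1. B k i j * (u / r) ^ (2 * j - 1)) * (deriv ^^ (2 * i - 1)) (\<lambda>q. Mf f q u) p"
            unfolding D_def kk by simp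
        qed (simp add: kk)
        finally show "(\<Sum>m\<le>k'. 2 * tc 3 (-4) k' m * Ia (2 * m + 1) u) = (\<Sum>i = 1..k.
              r ^ (2 * (i - 1))
              * (\<Sum>j = 1..k + i - 1. B k i j * (u / r) ^ (2 * j - 1))
              * (deriv ^^ (2 * i - 1)) (\<lambda>q. Mf f q u) p)" .
      qed
      finally show ?thesis .
    qed
  qed
  show ?thesis
    apply (rule exI[of _ A])
    apply (rule exI[of _ B])
    apply (intro allI impI)
    apply (erule main)
    done
qed


end
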